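(* Consider Dis-Lion-VR (defined in the context) under Assumptions (D2) and (D3), with initial batch size $B_0\ge1$, $\beta_1,\beta_2\in(0,1]$, $\beta_1\le\sqrt{\beta_2}$, $B_0\beta_2\le1$, $\eta>0$, $0\le\lambda\le\frac1{2\eta T}$ and $\|\mathbf{x}_1\|_\infty\le\eta$. Then $$\mathbb{E}\left[\frac1T\sum_{t=1}^T\Big\|\frac1n\sum_{j=1}^n\mathbf{m}_t^j-\nabla f(\mathbf{x}_t)\Big\|^2\right]\le\frac{\sigma^2}{n\beta_2B_0T}+\frac{2\sigma^2\beta_2}{n}+\frac{8L^2\eta^2d}{n\beta_2}$$ and $$\mathbb{E}\left[\frac1T\sum_{t=1}^T\Big\|\frac1n\sum_{j=1}^n\mathbf{v}_t^j-\nabla f(\mathbf{x}_t)\Big\|^2\right]\le\frac{2\sigma^2}{\beta_2nB_0T}+\frac{16\eta^2L^2d}{n\beta_2}+\frac{4\beta_2\sigma^2}{n}.$$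
   Context: Distributed setting: $n$ nodes; $f(\mathbf{x})=\frac1n\sum_{j=1}^nf_j(\mathbf{x})$ with $f_j(\mathbf{x})=\mathbb{E}_{\xi^j\sim\mathcal{D}_j}[f_j(\mathbf{x};\xi^j)]$, where the $\mathcal{D}_j$ may differ. Node $j$ draws samples $\xi^j\sim\mathcal{D}_j$, independent across nodes and time and of everything before, and for a drawn sample can evaluate $\nabla f_j(\cdot;\xi^j)$ at several points. $\|\cdot\|$ is the Euclidean norm; $\operatorname{sign}$ acts coordinatewise with values in $\{-1,0,1\}$. (D2) $\mathbb{E}_\xi\|\nabla f_j(\mathbf{x};\xi)-\nabla f_j(\mathbf{y};\xi)\|^2\le L^2\|\mathbf{x}-\mathbf{y}\|^2$ for all $j,\mathbf{x},\mathbf{y}$. (D3) $\mathbb{E}_{\xi}[\nabla f_j(\mathbf{x};\xi)]=\nabla f_j(\mathbf{x})$ and $\mathbb{E}_\xi\|\nabla f_j(\mathbf{x};\xi)-\nabla f_j(\mathbf{x})\|^2\le\sigma^2$ for all $j,\mathbf{x}$. Dis-Lion-VR: given $\mathbf{x}_1$, $\beta_1,\beta_2,\eta,\lambda,B_0$. At $t=1$ each node draws independent $\xi_1^{j,1},\dots,\xi_1^{j,B_0}$ and sets $\mathbf{v}_1^j=\mathbf{m}_1^j=\frac1{B_0}\sum_{i=1}^{B_0}\nabla f_j(\mathbf{x}_1;\xi_1^{j,i})$. For $t\ge2$ each node draws a fresh $\xi_t^j$ and sets, with $\mathbf{g}_t^j=\nabla f_j(\mathbf{x}_t;\xi_t^j)$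 and $\mathbf{h}_t^j=\nabla f_j(\mathbf{x}_{t-1};\xi_t^j)$: $\mathbf{v}_t^j=(1-\beta_1)\mathbf{m}_{t-1}^j+\beta_1\mathbf{g}_t^j+(1-\beta_1)(\mathbf{g}_t^j-\mathbf{h}_t^j)$, $\mathbf{m}_t^j=(1-\beta_2)\mathbf{m}_{t-1}^j+\beta_2\mathbf{g}_t^j+(1-\beta_2)(\mathbf{g}_t^j-\mathbf{h}_t^j)$. The server forms $\mathbf{v}_t=\sum_{j=1}^n\mathbf{v}_t^j$ and all nodes update $\mathbf{x}_{t+1}=\mathbf{x}_t-\eta(\operatorname{sign}(\mathbf{v}_t)+\lambda\mathbf{x}_t)$. *)

theory Defs
  imports "HOL-Probability.Probability"
begin

definition vsign :: "real^'d \<Rightarrow> real^'d" where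
  "vsign v = (\<chi> i. sgn (v $ i))"

text \<open>State of Dis-Lion-VR at time t (t \<ge> 1): (x_t, (m_t^j)_j, (v_t^j)_j).
  Nodes are indexed j = 0..n-1.  g j x s is the stochastic gradient
  nabla f_j(x; s).  S (t, j, i) is the i-th sample drawn by node j at time t;
  at t = 1 the samples i = 0..B0-1 are used, at t \<ge> 2 only S (t, j, 0).
  The value at t = 0 is a dummy (equal to the t = 1 state).\<close>
fun lion_state ::
  "nat \<Rightarrow> nat \<Rightarrow> real \<Rightarrow> real \<Rightarrow> real \<Rightarrow> real \<Rightarrow> real^'d
   \<Rightarrow> (nat \<Rightarrow> real^'d \<Rightarrow> 's \<Rightarrow> real^'d) \<Rightarrow> (nat \<times> nat \<times> nat \<Rightarrow> 's) \<Rightarrow> nat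
   \<Rightarrow> (real^'d) \<times> (nat \<Rightarrow> real^'d) \<times> (nat \<Rightarrow> real^'d)" where
  "lion_state n B0 \<beta>1 \<beta>2 \<eta> wd x1 g S 0 =
     (x1, (\<lambda>j. (1 / real B0) *\<^sub>R (\<Sum>i<B0. g j x1 (S (1, j, i)))),
          (\<lambda>j. (1 / real B0) *\<^sub>R (\<Sum>i<B0. g j x1 (S (1, j, i)))))"
| "lion_state n B0 \<beta>1 \<beta>2 \<eta> wd x1 g S (Suc 0) =
     (x1, (\<lambda>j. (1 / real B0) *\<^sub>R (\<Sum>i<B0. g j x1 (S (1, j, i)))),
          (\<lambda>j. (1 / real B0) *\<^sub>R (\<Sum>i<B0. g j x1 (S (1, j, i)))))"
| "lion_state n B0 \<beta>1 \<beta>2 \<eta> wd x1 g S (Suc (Suc k)) =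
     (let (x, m, v) = lion_state n B0 \<beta>1 \<beta>2 \<eta> wd x1 g S (Suc k);
          t = Suc (Suc k);
          x' = x - \<eta> *\<^sub>R (vsign (\<Sum>j<n. v j) + wd *\<^sub>R x);
          gt = (\<lambda>j. g j x' (S (t, j, 0)));
          ht = (\<lambda>j. g j x (S (t, j, 0)))
      in (x',
          (\<lambda>j. (1 - \<beta>2) *\<^sub>R m j + \<beta>2 *\<^sub>R gt j + (1 - \<beta>2) *\<^sub>R (gt j - ht j)),
          (\<lambda>j. (1 - \<beta>1) *\<^sub>R m j + \<beta>1 *\<^sub>R gt j + (1 - \<beta>1) *\<^sub>R (gt j - ht j))))"

definition lion_x where
  "lion_x n B0 \<beta>1 \<beta>2 \<eta> wd x1 g S t = fst (lion_state n B0 \<beta>1 \<beta>2 \<eta> wd x1 g S t)"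
definition lion_m where
  "lion_m n B0 \<beta>1 \<beta>2 \<eta> wd x1 g S t = fst (snd (lion_state n B0 \<beta>1 \<beta>2 \<eta> wd x1 g S t))"
definition lion_v where
  "lion_v n B0 \<beta>1 \<beta>2 \<eta> wd x1 g S t = snd (snd (lion_state n B0 \<beta>1 \<beta>2 \<eta> wd x1 g S t))"

definition lion_samples :: "nat \<Rightarrow> nat \<Rightarrow> (nat \<times> nat \<times> nat) set" where
  "lion_samples n B0 = {(1, j, i) | j i. j < n \<and> i < B0} \<union> {(t, j, 0) | t j. 2 \<le> t \<and> j < n}"

end

theory Submission
  imports Defs
begin


lemma lion_x_1: "lion_x n B0 b1 b2 e wd x1 g S (Suc 0) = x1"
  by (simp add: lion_x_def)
lemma lion_m_1: "lion_m n B0 b1 b2 e wd x1 g S (Suc 0) j = (1 / real B0) *\<^sub>R (\<Sum>i<B0. g j x1 (S (1, j, i)))"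
  by (simp add: lion_m_def)
lemma lion_v_1: "lion_v n B0 b1 b2 e wd x1 g S (Suc 0) j = (1 / real B0) *\<^sub>R (\<Sum>i<B0. g j x1 (S (1, j, i)))"
  by (simp add: lion_v_def)

lemma lion_x_SS: "lion_x n B0 b1 b2 e wd x1 g S (Suc (Suc k)) =
   lion_x n B0 b1 b2 e wd x1 g S (Suc k) - e *\<^sub>R (vsign (\<Sum>j<n. lion_v n B0 b1 b2 e wd x1 g S (Suc k) j)
      + wd *\<^sub>R lion_x n B0 b1 b2 e wd x1 g S (Suc k))"
  by (simp add: lion_x_def lion_v_def split: prod.split)

lemma lion_m_SS: "lion_m n B0 b1 b2 e wd x1 g S (Suc (Suc k)) j =
   (1 - b2) *\<^sub>R lion_m n B0 b1 b2 e wd x1 g S (Suc k) j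
   + b2 *\<^sub>R g j (lion_x n B0 b1 b2 e wd x1 g S (Suc (Suc k))) (S (Suc (Suc k), j, 0))
   + (1 - b2) *\<^sub>R (g j (lion_x n B0 b1 b2 e wd x1 g S (Suc (Suc k))) (S (Suc (Suc k), j, 0))
                   - g j (lion_x n B0 b1 b2 e wd x1 g S (Suc k)) (S (Suc (Suc k), j, 0)))"
  by (simp add: lion_x_def lion_v_def lion_m_def Let_def split: prod.split)

lemma lion_v_SS: "lion_v n B0 b1 b2 e wd x1 g S (Suc (Suc k)) j =
   (1 - b1) *\<^sub>R lion_m n B0 b1 b2 e wd x1 g S (Suc k) j
   + b1 *\<^sub>R g j (lion_x n B0 b1 b2 e wd x1 g S (Suc (Suc k))) (S (Suc (Suc k), j, 0))
   + (1 - b1) *\<^sub>R (g j (lion_x n B0 b1 b2 e wd x1 g S (Suc (Suc k))) (S (Suc (Suc k), j, 0))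
                   - g j (lion_x n B0 b1 b2 e wd x1 g S (Suc k)) (S (Suc (Suc k), j, 0)))"
  by (simp add: lion_x_def lion_v_def lion_m_def Let_def split: prod.split)




lemma sq_diff_le: fixes a b :: "'a::real_inner"
  shows "(norm (a - b))\<^sup>2 \<le> 2 * (norm a)\<^sup>2 + 2 * (norm b)\<^sup>2"
proof -
  have "(norm (a - b))\<^sup>2 = (norm a)\<^sup>2 - 2 * (a \<bullet> b) + (norm b)\<^sup>2"
    by (simp add: power2_norm_eq_inner inner_diff algebra_simps inner_commute)
  moreover have "0 \<le> (norm (a + b))\<^sup>2" by simp
  moreover have "(norm (a + b))\<^sup>2 = (norm a)\<^sup>2 + 2 * (a \<bullet> b) + (norm b)\<^sup>2"
    by (simp add: power2_norm_eq_inner inner_add algebra_simps inner_commute)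
  ultimately show ?thesis by linarith
qed

lemma sq_add_le: fixes a b :: "'a::real_inner"
  shows "(norm (a + b))\<^sup>2 \<le> 2 * (norm a)\<^sup>2 + 2 * (norm b)\<^sup>2"
  using sq_diff_le[of a "-b"] by simp

lemma expand_sq:
  fixes \<phi> :: "'s \<Rightarrow> 'a::euclidean_space"
  assumes D: "prob_space D" and int: "integrable D \<phi>" and mean: "(\<integral>s. \<phi> s \<partial>D) = 0"
  shows "(\<integral>\<^sup>+s. ennreal ((norm (w + \<phi> s))\<^sup>2) \<partial>D)
         = ennreal ((norm w)\<^sup>2) + (\<integral>\<^sup>+s. ennreal ((norm (\<phi> s))\<^sup>2) \<partial>D)"
proof -
  interpret prob_space D by (rule D)
  have [measurable]: "\<phi> \<in> borel_measurable D" using int by auto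
  show ?thesis
  proof (cases "(\<integral>\<^sup>+s. ennreal ((norm (\<phi> s))\<^sup>2) \<partial>D) = \<infinity>")
    case True
    have "(\<integral>\<^sup>+s. ennreal ((norm (\<phi> s))\<^sup>2) \<partial>D)
          \<le> (\<integral>\<^sup>+s. 2 * ennreal ((norm (w + \<phi> s))\<^sup>2) + ennreal (2 * (norm w)\<^sup>2) \<partial>D)"
    proof (rule nn_integral_mono)
      fix s
      have "(norm (\<phi> s))\<^sup>2 \<le> 2 * (norm (w + \<phi> s))\<^sup>2 + 2 * (norm w)\<^sup>2"
        using sq_diff_le[of "w + \<phi> s" w] by simp
      then show "ennreal ((norm (\<phi> s))\<^sup>2) \<le> 2 * ennreal ((norm (w + \<phi> s))\<^sup>2) + ennreal (2 * (norm w)\<^sup>2)"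
      proof -
        have "ennreal ((norm (\<phi> s))\<^sup>2) \<le> ennreal (2 * (norm (w + \<phi> s))\<^sup>2 + 2 * (norm w)\<^sup>2)"
          by (rule ennreal_leI) fact
        also have "\<dots> = ennreal (2 * (norm (w + \<phi> s))\<^sup>2) + ennreal (2 * (norm w)\<^sup>2)"
          by (rule ennreal_plus) simp_all
        also have "ennreal (2 * (norm (w + \<phi> s))\<^sup>2) = 2 * ennreal ((norm (w + \<phi> s))\<^sup>2)"
          by (simp add: ennreal_mult)
        finally show ?thesis .
      qed
    qed
    also have "\<dots> = 2 * (\<integral>\<^sup>+s. ennreal ((norm (w + \<phi> s))\<^sup>2) \<partial>D) + ennreal (2 * (norm w)\<^sup>2)"
      by (simp add: nn_integral_add nn_integral_cmult emeasure_space_1)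
    finally have "(\<integral>\<^sup>+s. ennreal ((norm (w + \<phi> s))\<^sup>2) \<partial>D) = \<infinity>"
      using True by (auto simp: top_unique ennreal_mult_eq_top_iff)
    then show ?thesis using True by simp
  next
    case False
    then obtain r where r: "(\<integral>\<^sup>+s. ennreal ((norm (\<phi> s))\<^sup>2) \<partial>D) = ennreal r" "0 \<le> r"
      using less_top ennreal_cases by (metis ennreal_less_top infinity_ennreal_def top.not_eq_extremum)
    have i2: "integrable D (\<lambda>s. (norm (\<phi> s))\<^sup>2)"
      by (rule integrableI_nn_integral_finite[OF _ _ r(1)]) auto
    have eq: "\<And>s. (norm (w + \<phi> s))\<^sup>2 = (norm w)\<^sup>2 + 2 * (w \<bullet> \<phi> s) + (norm (\<phi> s))\<^sup>2"
      by (simp add: power2_norm_eq_inner inner_add algebra_simps inner_commute)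
    have i3: "integrable D (\<lambda>s. (norm (w + \<phi> s))\<^sup>2)"
      unfolding eq using i2 int by auto
    have "(\<integral>\<^sup>+s. ennreal ((norm (w + \<phi> s))\<^sup>2) \<partial>D) = ennreal (\<integral>s. (norm (w + \<phi> s))\<^sup>2 \<partial>D)"
      by (rule nn_integral_eq_integral[OF i3]) auto
    also have "(\<integral>s. (norm (w + \<phi> s))\<^sup>2 \<partial>D) = (norm w)\<^sup>2 + (\<integral>s. (norm (\<phi> s))\<^sup>2 \<partial>D)"
      unfolding eq using i2 int mean by (simp add: prob_space)
    also have "(\<integral>s. (norm (\<phi> s))\<^sup>2 \<partial>D) = r"
      using nn_integral_eq_integral[OF i2] r by auto
    finally show ?thesis using r by (simp add: ennreal_plus)
  qed
qed


definition depends_on :: "'i set \<Rightarrow> (('i \<Rightarrow> 's) \<Rightarrow> 'b) \<Rightarrow> bool" where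
  "depends_on J F \<longleftrightarrow> (\<forall>S S'. (\<forall>i\<in>J. S i = S' i) \<longrightarrow> F S = F S')"

lemma depends_onD: "depends_on J F \<Longrightarrow> (\<And>i. i \<in> J \<Longrightarrow> S i = S' i) \<Longrightarrow> F S = F S'"
  unfolding depends_on_def by blast

lemma depends_on_mono: "depends_on J F \<Longrightarrow> J \<subseteq> K \<Longrightarrow> depends_on K F"
  unfolding depends_on_def by blast

locale lionctx =
  fixes M :: "'w measure" and D :: "nat \<Rightarrow> 's measure"
    and xi :: "nat \<times> nat \<times> nat \<Rightarrow> 'w \<Rightarrow> 's"
    and n B0 :: nat
  assumes M: "prob_space M"
    and D: "\<And>j. j < n \<Longrightarrow> prob_space (D j)"
    and xi_distr: "\<And>k. k \<in> lion_samples n B0 \<Longrightarrow>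
                     distr M (D (fst (snd k))) (xi k) = D (fst (snd k))"
    and xi_indep: "prob_space.indep_vars M (\<lambda>k. D (fst (snd k))) xi (lion_samples n B0)"
begin

definition Dk :: "nat \<times> nat \<times> nat \<Rightarrow> 's measure" where
  "Dk k = (if fst (snd k) < n then D (fst (snd k)) else count_space {})"

lemma samples_n: "k \<in> lion_samples n B0 \<Longrightarrow> fst (snd k) < n"
  unfolding lion_samples_def by auto

lemma Dk_eq: "k \<in> lion_samples n B0 \<Longrightarrow> Dk k = D (fst (snd k))"
  unfolding Dk_def using samples_n by auto

lemma Dk_prob: "k \<in> lion_samples n B0 \<Longrightarrow> prob_space (Dk k)"
  using Dk_eq samples_n D by auto

lemma Dk_sf: "sigma_finite_measure (Dk k)"
proof (cases "fst (snd k) < n")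
  case True then show ?thesis unfolding Dk_def using D prob_space_imp_sigma_finite by auto
next
  case False then show ?thesis unfolding Dk_def by (simp add: sigma_finite_measure_count_space_finite)
qed

sublocale PS: product_sigma_finite Dk
  by (rule product_sigma_finite.intro) (rule Dk_sf)

sublocale P: prob_space M by (rule M)

lemma indepDk: "P.indep_vars Dk xi (lion_samples n B0)"
  using xi_indep by (subst P.indep_vars_cong[where N'="\<lambda>k. D (fst (snd k))" and Y=xi and J="lion_samples n B0"]) (auto simp: Dk_eq)

lemma xi_meas: "k \<in> lion_samples n B0 \<Longrightarrow> xi k \<in> measurable M (Dk k)"
  using indepDk unfolding P.indep_vars_def by auto

lemma distrDk: "k \<in> lion_samples n B0 \<Longrightarrow> distr M (Dk k) (xi k) = Dk k"
  using xi_distr Dk_eq by simp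

lemma restrict_meas: "J \<subseteq> lion_samples n B0 \<Longrightarrow> (\<lambda>\<omega>. \<lambda>i\<in>J. xi i \<omega>) \<in> measurable M (PiM J Dk)"
  by (rule measurable_restrict) (auto intro: xi_meas)

lemma meas_M:
  assumes J: "J \<subseteq> lion_samples n B0" and dep: "depends_on J F" and F: "F \<in> measurable (PiM J Dk) N"
  shows "(\<lambda>\<omega>. F (\<lambda>i. xi i \<omega>)) \<in> measurable M N"
proof -
  have "(\<lambda>\<omega>. F (\<lambda>i\<in>J. xi i \<omega>)) \<in> measurable M N"
    using measurable_compose[OF restrict_meas[OF J] F] .
  moreover have "\<And>\<omega>. F (\<lambda>i\<in>J. xi i \<omega>) = F (\<lambda>i. xi i \<omega>)"
    by (rule depends_onD[OF dep]) simp
  ultimately show ?thesis by simp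
qed

lemma tonelli:
  assumes J: "finite J" "J \<subseteq> lion_samples n B0" and k: "k \<in> lion_samples n B0" "k \<notin> J"
    and dep: "depends_on J G"
    and G: "(\<lambda>p. G (fst p) (snd p)) \<in> borel_measurable (PiM J Dk \<Otimes>\<^sub>M Dk k)"
  shows "(\<integral>\<^sup>+\<omega>. G (\<lambda>i. xi i \<omega>) (xi k \<omega>) \<partial>M) = (\<integral>\<^sup>+S. (\<integral>\<^sup>+s. G S s \<partial>Dk k) \<partial>PiM J Dk)"
proof -
  let ?K = "insert k J"
  have K: "?K \<subseteq> lion_samples n B0" using J k by auto
  have ind: "P.indep_vars Dk xi ?K" using P.indep_vars_subset[OF indepDk K] .
  have dK: "distr M (PiM ?K Dk) (\<lambda>\<omega>. \<lambda>i\<in>?K. xi i \<omega>) = PiM ?K (\<lambda>i. distr M (Dk i) (xi i))"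
    using ind P.indep_vars_iff_distr_eq_PiM'[where I="?K" and M'=Dk and X=xi] K xi_meas by auto
  also have "\<dots> = PiM ?K Dk"
    by (rule PiM_cong) (use K distrDk in auto)
  finally have dK: "distr M (PiM ?K Dk) (\<lambda>\<omega>. \<lambda>i\<in>?K. xi i \<omega>) = PiM ?K Dk" .
  define H where "H y = G (restrict y J) (y k)" for y
  have Hm: "H \<in> borel_measurable (PiM ?K Dk)"
  proof -
    have "(\<lambda>y. (restrict y J, y k)) \<in> measurable (PiM ?K Dk) (PiM J Dk \<Otimes>\<^sub>M Dk k)"
      by (intro measurable_Pair measurable_restrict_subset measurable_component_singleton) auto
    from measurable_compose[OF this G] show ?thesis unfolding H_def by simp
  qed
  have "(\<integral>\<^sup>+\<omega>. G (\<lambda>i. xi i \<omega>) (xi k \<omega>) \<partial>M) = (\<integral>\<^sup>+\<omega>. H (\<lambda>i\<in>?K. xi i \<omega>) \<partial>M)"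
  proof (rule nn_integral_cong)
    fix \<omega>
    have "G (\<lambda>i\<in>J. xi i \<omega>) = G (\<lambda>i. xi i \<omega>)" by (rule depends_onD[OF dep]) simp
    then show "G (\<lambda>i. xi i \<omega>) (xi k \<omega>) = H (\<lambda>i\<in>?K. xi i \<omega>)"
      unfolding H_def by (simp add: restrict_def cong: if_cong)
  qed
  also have "\<dots> = (\<integral>\<^sup>+y. H y \<partial>distr M (PiM ?K Dk) (\<lambda>\<omega>. \<lambda>i\<in>?K. xi i \<omega>))"
    by (rule nn_integral_distr[symmetric, OF restrict_meas[OF K]]) (simp only: dK Hm)
  also have "\<dots> = (\<integral>\<^sup>+y. H y \<partial>PiM ?K Dk)" by (simp add: dK)
  also have "\<dots> = (\<integral>\<^sup>+x. (\<integral>\<^sup>+s. H (x(k := s)) \<partial>Dk k) \<partial>PiM J Dk)"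
    by (rule PS.product_nn_integral_insert) (use J k Hm in auto)
  also have "\<dots> = (\<integral>\<^sup>+S. (\<integral>\<^sup>+s. G S s \<partial>Dk k) \<partial>PiM J Dk)"
  proof (intro nn_integral_cong)
    fix x s
    have "G (restrict (x(k := s)) J) = G x" by (rule depends_onD[OF dep]) (use k in auto)
    then show "H (x(k := s)) = G x s" unfolding H_def by simp
  qed
  finally show ?thesis .
qed


lemma PiM_prob: "J \<subseteq> lion_samples n B0 \<Longrightarrow> prob_space (PiM J Dk)"
  by (rule prob_space_PiM) (auto intro: Dk_prob)

lemma step:
  fixes W :: "(nat \<times> nat \<times> nat \<Rightarrow> 's) \<Rightarrow> 'a::euclidean_space"
    and \<phi> :: "(nat \<times> nat \<times> nat \<Rightarrow> 's) \<Rightarrow> 's \<Rightarrow> 'a"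
  assumes J: "finite J" "J \<subseteq> lion_samples n B0" and k: "k \<in> lion_samples n B0" "k \<notin> J"
    and depW: "depends_on J W" and Wm: "W \<in> borel_measurable (PiM J Dk)"
    and dep\<phi>: "depends_on J \<phi>" and \<phi>m: "(\<lambda>p. \<phi> (fst p) (snd p)) \<in> borel_measurable (PiM J Dk \<Otimes>\<^sub>M Dk k)"
    and int: "\<And>S. integrable (Dk k) (\<phi> S)" and mean: "\<And>S. (\<integral>s. \<phi> S s \<partial>Dk k) = 0"
    and bnd: "\<And>S. (\<integral>\<^sup>+s. ennreal ((norm (\<phi> S s))\<^sup>2) \<partial>Dk k) \<le> ennreal K"
  shows "(\<integral>\<^sup>+\<omega>. ennreal ((norm (W (\<lambda>i. xi i \<omega>) + \<phi> (\<lambda>i. xi i \<omega>) (xi k \<omega>)))\<^sup>2) \<partial>M)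
         \<le> (\<integral>\<^sup>+\<omega>. ennreal ((norm (W (\<lambda>i. xi i \<omega>)))\<^sup>2) \<partial>M) + ennreal K"
proof -
  interpret Q: prob_space "Dk k" using Dk_prob[OF k(1)] .
  interpret PJ: prob_space "PiM J Dk" using PiM_prob[OF J(2)] .
  have Wm2[measurable]: "(\<lambda>p. W (fst p)) \<in> borel_measurable (PiM J Dk \<Otimes>\<^sub>M Dk k)"
    by (rule measurable_compose[OF _ Wm]) (rule measurable_fst)
  have \<phi>m2[measurable]: "(\<lambda>p. \<phi> (fst p) (snd p)) \<in> borel_measurable (PiM J Dk \<Otimes>\<^sub>M Dk k)" by (rule \<phi>m)
  have dep1: "depends_on J (\<lambda>S s. ennreal ((norm (W S + \<phi> S s))\<^sup>2))"
    unfolding depends_on_def using depends_onD[OF depW] depends_onD[OF dep\<phi>] by metis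
  have dep2: "depends_on J (\<lambda>S (s::'s). ennreal ((norm (W S))\<^sup>2))"
    unfolding depends_on_def using depends_onD[OF depW] by metis
  have "(\<integral>\<^sup>+\<omega>. ennreal ((norm (W (\<lambda>i. xi i \<omega>) + \<phi> (\<lambda>i. xi i \<omega>) (xi k \<omega>)))\<^sup>2) \<partial>M)
      = (\<integral>\<^sup>+S. (\<integral>\<^sup>+s. ennreal ((norm (W S + \<phi> S s))\<^sup>2) \<partial>Dk k) \<partial>PiM J Dk)"
    by (rule tonelli[OF J k dep1]) measurable
  also have "\<dots> = (\<integral>\<^sup>+S. ennreal ((norm (W S))\<^sup>2) + (\<integral>\<^sup>+s. ennreal ((norm (\<phi> S s))\<^sup>2) \<partial>Dk k) \<partial>PiM J Dk)"
    by (intro nn_integral_cong expand_sq Q.prob_space_axioms int mean)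
  also have "\<dots> \<le> (\<integral>\<^sup>+S. ennreal ((norm (W S))\<^sup>2) + ennreal K \<partial>PiM J Dk)"
    by (intro nn_integral_mono add_left_mono bnd)
  also have "\<dots> = (\<integral>\<^sup>+S. ennreal ((norm (W S))\<^sup>2) \<partial>PiM J Dk) + ennreal K"
    using Wm by (simp add: nn_integral_add PJ.emeasure_space_1)
  also have "(\<integral>\<^sup>+S. ennreal ((norm (W S))\<^sup>2) \<partial>PiM J Dk)
      = (\<integral>\<^sup>+S. (\<integral>\<^sup>+s. ennreal ((norm (W S))\<^sup>2) \<partial>Dk k) \<partial>PiM J Dk)"
    by (simp add: Q.emeasure_space_1)
  also have "\<dots> = (\<integral>\<^sup>+\<omega>. ennreal ((norm (W (\<lambda>i. xi i \<omega>)))\<^sup>2) \<partial>M)"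
    by (rule tonelli[OF J k dep2, symmetric]) measurable
  finally show ?thesis .
qed

lemma iter:
  fixes W0 :: "(nat \<times> nat \<times> nat \<Rightarrow> 's) \<Rightarrow> 'a::euclidean_space"
    and \<phi> :: "nat \<times> nat \<times> nat \<Rightarrow> (nat \<times> nat \<times> nat \<Rightarrow> 's) \<Rightarrow> 's \<Rightarrow> 'a"
  assumes Ks: "finite Ks" "Ks \<subseteq> A" and A: "A \<subseteq> lion_samples n B0" "A \<inter> J0 = {}"
    and J0: "finite J0" "J0 \<subseteq> lion_samples n B0"
    and depW: "depends_on J0 W0" and Wm: "\<And>J. J0 \<subseteq> J \<Longrightarrow> W0 \<in> borel_measurable (PiM J Dk)"
    and dep\<phi>: "\<And>k. k \<in> A \<Longrightarrow> depends_on J0 (\<phi> k)"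
    and \<phi>m: "\<And>k J. k \<in> A \<Longrightarrow> J0 \<subseteq> J \<Longrightarrow> (\<lambda>p. \<phi> k (fst p) (snd p)) \<in> borel_measurable (PiM J Dk \<Otimes>\<^sub>M Dk k)"
    and int: "\<And>k S. k \<in> A \<Longrightarrow> integrable (Dk k) (\<phi> k S)"
    and mean: "\<And>k S. k \<in> A \<Longrightarrow> (\<integral>s. \<phi> k S s \<partial>Dk k) = 0"
    and bnd: "\<And>k S. k \<in> A \<Longrightarrow> (\<integral>\<^sup>+s. ennreal ((norm (\<phi> k S s))\<^sup>2) \<partial>Dk k) \<le> ennreal K"
    and K: "0 \<le> K"
  shows "(\<integral>\<^sup>+\<omega>. ennreal ((norm (W0 (\<lambda>i. xi i \<omega>) + (\<Sum>k\<in>Ks. \<phi> k (\<lambda>i. xi i \<omega>) (xi k \<omega>))))\<^sup>2) \<partial>M)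
         \<le> (\<integral>\<^sup>+\<omega>. ennreal ((norm (W0 (\<lambda>i. xi i \<omega>)))\<^sup>2) \<partial>M) + ennreal (real (card Ks) * K)"
  using Ks
proof (induction Ks rule: finite_subset_induct')
  case empty
  then show ?case by simp
next
  case (insert a F)
  define W where "W S = W0 S + (\<Sum>k\<in>F. \<phi> k S (S k))" for S
  have JF: "finite (J0 \<union> F)" "J0 \<union> F \<subseteq> lion_samples n B0" using insert J0 A by auto
  have aJ: "a \<in> lion_samples n B0" "a \<notin> J0 \<union> F" using insert A by auto
  have depW': "depends_on (J0 \<union> F) W"
    unfolding depends_on_def W_def
  proof (intro allI impI)
    fix S S' :: "nat \<times> nat \<times> nat \<Rightarrow> 's" assume h: "\<forall>i\<in>J0 \<union> F. S i = S' i"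
    have "W0 S = W0 S'" by (rule depends_onD[OF depW]) (use h in auto)
    moreover have "(\<Sum>k\<in>F. \<phi> k S (S k)) = (\<Sum>k\<in>F. \<phi> k S' (S' k))"
    proof (rule sum.cong)
      fix k assume "k \<in> F"
      moreover have "\<phi> k S = \<phi> k S'" by (rule depends_onD[OF dep\<phi>]) (use h insert \<open>k \<in> F\<close> in auto)
      ultimately show "\<phi> k S (S k) = \<phi> k S' (S' k)" using h by auto
    qed simp
    ultimately show "W0 S + (\<Sum>k\<in>F. \<phi> k S (S k)) = W0 S' + (\<Sum>k\<in>F. \<phi> k S' (S' k))" by simp
  qed
  have Wm': "W \<in> borel_measurable (PiM (J0 \<union> F) Dk)"
    unfolding W_def
  proof (intro borel_measurable_add borel_measurable_sum Wm)
    fix k assume k: "k \<in> F"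
    have "(\<lambda>S. (S, S k)) \<in> measurable (PiM (J0 \<union> F) Dk) (PiM (J0 \<union> F) Dk \<Otimes>\<^sub>M Dk k)"
      by (intro measurable_Pair measurable_ident_sets measurable_component_singleton) (use k in auto)
    from measurable_compose[OF this \<phi>m[of k "J0 \<union> F"]]
    show "(\<lambda>S. \<phi> k S (S k)) \<in> borel_measurable (PiM (J0 \<union> F) Dk)" using k insert by auto
  qed auto
  have "(\<integral>\<^sup>+\<omega>. ennreal ((norm (W0 (\<lambda>i. xi i \<omega>) + (\<Sum>k\<in>insert a F. \<phi> k (\<lambda>i. xi i \<omega>) (xi k \<omega>))))\<^sup>2) \<partial>M)
      = (\<integral>\<^sup>+\<omega>. ennreal ((norm (W (\<lambda>i. xi i \<omega>) + \<phi> a (\<lambda>i. xi i \<omega>) (xi a \<omega>)))\<^sup>2) \<partial>M)"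
    using insert by (simp add: W_def algebra_simps)
  also have "\<dots> \<le> (\<integral>\<^sup>+\<omega>. ennreal ((norm (W (\<lambda>i. xi i \<omega>)))\<^sup>2) \<partial>M) + ennreal K"
    by (rule step[OF JF aJ depW' Wm' depends_on_mono[OF dep\<phi>] \<phi>m int mean bnd]) (use insert in auto)
  also have "\<dots> \<le> (\<integral>\<^sup>+\<omega>. ennreal ((norm (W0 (\<lambda>i. xi i \<omega>)))\<^sup>2) \<partial>M) + ennreal (real (card F) * K) + ennreal K"
    using insert.IH unfolding W_def by (intro add_right_mono) auto
  also have "\<dots> = (\<integral>\<^sup>+\<omega>. ennreal ((norm (W0 (\<lambda>i. xi i \<omega>)))\<^sup>2) \<partial>M) + ennreal (real (card (insert a F)) * K)"
    using insert K by (simp add: add.assoc ennreal_plus[symmetric] algebra_simps del: ennreal_plus)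
  finally show ?case .
qed

end



locale lionalg = lionctx M D xi n B0 for M :: "'w measure" and D :: "nat \<Rightarrow> 's measure" and xi n B0 +
  fixes gradf :: "nat \<Rightarrow> real^'d \<Rightarrow> real^'d" and g :: "nat \<Rightarrow> real^'d \<Rightarrow> 's \<Rightarrow> real^'d"
    and T :: nat and L \<sigma> \<beta>1 \<beta>2 \<eta> wd :: real and x1 :: "real^'d"
  assumes n: "1 \<le> n" and T: "1 \<le> T"
    and g_meas: "\<And>j. j < n \<Longrightarrow> (\<lambda>(x, s). g j x s) \<in> borel_measurable (borel \<Otimes>\<^sub>M D j)"
    and D2: "\<And>j x y. j < n \<Longrightarrow>
               (\<integral>\<^sup>+ s. ennreal ((norm (g j x s - g j y s))\<^sup>2) \<partial>D j) \<le> ennreal (L\<^sup>2 * (norm (x - y))\<^sup>2)"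
    and D3_int: "\<And>j x. j < n \<Longrightarrow> integrable (D j) (g j x)"
    and D3_mean: "\<And>j x. j < n \<Longrightarrow> (\<integral>s. g j x s \<partial>D j) = gradf j x"
    and D3_var: "\<And>j x. j < n \<Longrightarrow>
               (\<integral>\<^sup>+ s. ennreal ((norm (g j x s - gradf j x))\<^sup>2) \<partial>D j) \<le> ennreal (\<sigma>\<^sup>2)"
    and B0: "1 \<le> B0"
    and b1: "0 < \<beta>1" "\<beta>1 \<le> 1"
    and b2: "0 < \<beta>2" "\<beta>2 \<le> 1"
    and b12: "\<beta>1 \<le> sqrt \<beta>2"
    and eta: "0 < \<eta>"
    and lam: "0 \<le> wd" "wd \<le> 1 / (2 * \<eta> * real T)"
    and x1: "\<And>i. \<bar>x1 $ i\<bar> \<le> \<eta>"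
begin

definition X where "X t S = lion_x n B0 \<beta>1 \<beta>2 \<eta> wd x1 g S t"
definition Mm where "Mm t S j = lion_m n B0 \<beta>1 \<beta>2 \<eta> wd x1 g S t j"
definition V where "V t S j = lion_v n B0 \<beta>1 \<beta>2 \<eta> wd x1 g S t j"
definition I where "I t = {k \<in> lion_samples n B0. fst k \<le> t}"

lemma X_1: "X (Suc 0) S = x1" by (simp add: X_def lion_x_1)
lemma Mm_1: "Mm (Suc 0) S j = (1 / real B0) *\<^sub>R (\<Sum>i<B0. g j x1 (S (1, j, i)))"
  by (simp add: Mm_def lion_m_1)
lemma V_1: "V (Suc 0) S j = (1 / real B0) *\<^sub>R (\<Sum>i<B0. g j x1 (S (1, j, i)))"
  by (simp add: V_def lion_v_1)
lemma X_SS: "X (Suc (Suc k)) S = X (Suc k) S - \<eta> *\<^sub>R (vsign (\<Sum>j<n. V (Suc k) S j) + wd *\<^sub>R X (Suc k) S)"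
  by (simp add: X_def V_def lion_x_SS)
lemma Mm_SS: "Mm (Suc (Suc k)) S j =
   (1 - \<beta>2) *\<^sub>R Mm (Suc k) S j
   + \<beta>2 *\<^sub>R g j (X (Suc (Suc k)) S) (S (Suc (Suc k), j, 0))
   + (1 - \<beta>2) *\<^sub>R (g j (X (Suc (Suc k)) S) (S (Suc (Suc k), j, 0)) - g j (X (Suc k) S) (S (Suc (Suc k), j, 0)))"
  unfolding Mm_def X_def by (rule lion_m_SS)
lemma V_SS: "V (Suc (Suc k)) S j =
   (1 - \<beta>1) *\<^sub>R Mm (Suc k) S j
   + \<beta>1 *\<^sub>R g j (X (Suc (Suc k)) S) (S (Suc (Suc k), j, 0))
   + (1 - \<beta>1) *\<^sub>R (g j (X (Suc (Suc k)) S) (S (Suc (Suc k), j, 0)) - g j (X (Suc k) S) (S (Suc (Suc k), j, 0)))"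
  unfolding V_def Mm_def X_def by (rule lion_v_SS)

lemma I_sub: "I t \<subseteq> lion_samples n B0" unfolding I_def by auto
lemma I_mono: "t \<le> t' \<Longrightarrow> I t \<subseteq> I t'" unfolding I_def by auto
lemma I_finite: "finite (I t)"
proof -
  have "I t \<subseteq> {..t} \<times> {..<n} \<times> {..<B0}" using B0 unfolding I_def lion_samples_def by auto
  then show ?thesis by (rule finite_subset) auto
qed
lemma I_1: "j < n \<Longrightarrow> i < B0 \<Longrightarrow> (Suc 0, j, i) \<in> I (Suc 0)"
  unfolding I_def lion_samples_def by auto
lemma I_SS: "j < n \<Longrightarrow> (Suc (Suc k), j, 0) \<in> I (Suc (Suc k))"
  unfolding I_def lion_samples_def by auto
lemma key_samples: "j < n \<Longrightarrow> (Suc (Suc k), j, 0) \<in> lion_samples n B0"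
  unfolding lion_samples_def by auto
lemma key_notin: "(Suc (Suc k), j, 0) \<notin> I (Suc k)"
  unfolding I_def by auto

lemma dep_all: "depends_on (I (Suc k)) (X (Suc k)) \<and>
   (\<forall>j<n. depends_on (I (Suc k)) (\<lambda>S. Mm (Suc k) S j) \<and> depends_on (I (Suc k)) (\<lambda>S. V (Suc k) S j))"
proof (induction k)
  case 0
  show ?case unfolding depends_on_def X_1 Mm_1 V_1
    by (auto intro!: sum.cong arg_cong[where f="\<lambda>v. c *\<^sub>R v" for c] simp: I_1)
next
  case (Suc k)
  have dX: "depends_on (I (Suc (Suc k))) (X (Suc (Suc k)))"
    unfolding depends_on_def
  proof (intro allI impI)
    fix S S' :: "nat \<times> nat \<times> nat \<Rightarrow> 's" assume h: "\<forall>i\<in>I (Suc (Suc k)). S i = S' i"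
    then have h1: "\<forall>i\<in>I (Suc k). S i = S' i" using I_mono[of "Suc k" "Suc (Suc k)"] by auto
    have "X (Suc k) S = X (Suc k) S'" using Suc.IH h1 depends_onD by blast
    moreover have "(\<Sum>j<n. V (Suc k) S j) = (\<Sum>j<n. V (Suc k) S' j)"
      using Suc.IH h1 depends_onD by (intro sum.cong) blast+
    ultimately show "X (Suc (Suc k)) S = X (Suc (Suc k)) S'" by (simp add: X_SS)
  qed
  have "depends_on (I (Suc (Suc k))) (\<lambda>S. Mm (Suc (Suc k)) S j) \<and> depends_on (I (Suc (Suc k))) (\<lambda>S. V (Suc (Suc k)) S j)"
    if j: "j < n" for j
    unfolding depends_on_def
  proof (intro conjI allI impI)
    fix S S' :: "nat \<times> nat \<times> nat \<Rightarrow> 's" assume h: "\<forall>i\<in>I (Suc (Suc k)). S i = S' i"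
    then have h1: "\<forall>i\<in>I (Suc k). S i = S' i" using I_mono[of "Suc k" "Suc (Suc k)"] by auto
    have e1: "X (Suc k) S = X (Suc k) S'" using Suc.IH h1 depends_onD by blast
    have e2: "Mm (Suc k) S j = Mm (Suc k) S' j" using Suc.IH h1 depends_onD j by blast
    have e3: "X (Suc (Suc k)) S = X (Suc (Suc k)) S'" using dX h depends_onD by blast
    have e4: "S (Suc (Suc k), j, 0) = S' (Suc (Suc k), j, 0)" using h I_SS[OF j] by auto
    show "Mm (Suc (Suc k)) S j = Mm (Suc (Suc k)) S' j" by (simp add: Mm_SS e1 e2 e3 e4)
    show "V (Suc (Suc k)) S j = V (Suc (Suc k)) S' j" by (simp add: V_SS e1 e2 e3 e4)
  qed
  with dX show ?case by blast
qed

lemma dep_X: "depends_on (I (Suc k)) (X (Suc k))" using dep_all by blast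
lemma dep_Mm: "j < n \<Longrightarrow> depends_on (I (Suc k)) (\<lambda>S. Mm (Suc k) S j)" using dep_all by blast
lemma dep_V: "j < n \<Longrightarrow> depends_on (I (Suc k)) (\<lambda>S. V (Suc k) S j)" using dep_all by blast

lemma dep_Xnext: "depends_on (I (Suc k)) (X (Suc (Suc k)))"
  unfolding depends_on_def
proof (intro allI impI)
  fix S S' :: "nat \<times> nat \<times> nat \<Rightarrow> 's" assume h1: "\<forall>i\<in>I (Suc k). S i = S' i"
  have "X (Suc k) S = X (Suc k) S'" using dep_X h1 depends_onD by blast
  moreover have "(\<Sum>j<n. V (Suc k) S j) = (\<Sum>j<n. V (Suc k) S' j)"
    using dep_V h1 depends_onD by (intro sum.cong) blast+
  ultimately show "X (Suc (Suc k)) S = X (Suc (Suc k)) S'" by (simp add: X_SS)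
qed


lemma gcomp:
  assumes j: "j < n" and F: "F \<in> borel_measurable N" and G: "G \<in> measurable N (D j)"
  shows "(\<lambda>\<omega>. g j (F \<omega>) (G \<omega>)) \<in> borel_measurable N"
proof -
  have "(\<lambda>\<omega>. (F \<omega>, G \<omega>)) \<in> measurable N (borel \<Otimes>\<^sub>M D j)" by (rule measurable_Pair[OF F G])
  from measurable_compose[OF this g_meas[OF j]] show ?thesis by simp
qed

lemma comp_key:
  assumes "key \<in> J" "key \<in> lion_samples n B0" "fst (snd key) = j"
  shows "(\<lambda>S. S key) \<in> measurable (PiM J Dk) (D j)"
  using measurable_component_singleton[of key J Dk] Dk_eq assms by simp

lemma vsign_meas:
  assumes F: "F \<in> borel_measurable N"
  shows "(\<lambda>\<omega>. vsign (F \<omega>)) \<in> borel_measurable N"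
proof -
  have "(\<lambda>\<omega>. vsign (F \<omega>) \<bullet> b) \<in> borel_measurable N" if b: "b \<in> Basis" for b
  proof -
    from b obtain i where bi: "b = axis i (1::real)" unfolding Basis_vec_def by auto
    have "(\<lambda>\<omega>. F \<omega> \<bullet> b) \<in> borel_measurable N" using F by measurable
    then have "(\<lambda>\<omega>. sgn (F \<omega> \<bullet> b)) \<in> borel_measurable N" by measurable
    moreover have "\<And>\<omega>. vsign (F \<omega>) \<bullet> b = sgn (F \<omega> \<bullet> b)"
      by (simp add: bi inner_axis vsign_def)
    ultimately show ?thesis by simp
  qed
  then show ?thesis by (subst borel_measurable_euclidean_space) auto
qed

lemma gradf_meas: "j < n \<Longrightarrow> gradf j \<in> borel_measurable borel"
proof -
  assume j: "j < n"
  interpret Dj: prob_space "D j" using D[OF j] .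
  have "(\<lambda>x. \<integral>s. g j x s \<partial>D j) \<in> borel_measurable borel"
    by (rule Dj.borel_measurable_lebesgue_integral) (use g_meas[OF j] in simp)
  moreover have "(\<lambda>x. \<integral>s. g j x s \<partial>D j) = gradf j" using D3_mean[OF j] by auto
  ultimately show ?thesis by simp
qed

lemma Xnext_meas:
  assumes "X (Suc k) \<in> borel_measurable N" "\<And>j. j < n \<Longrightarrow> (\<lambda>S. V (Suc k) S j) \<in> borel_measurable N"
  shows "X (Suc (Suc k)) \<in> borel_measurable N"
proof -
  have [measurable]: "(\<lambda>S. vsign (\<Sum>j<n. V (Suc k) S j)) \<in> borel_measurable N"
    by (intro vsign_meas borel_measurable_sum) (use assms in auto)
  have [measurable]: "X (Suc k) \<in> borel_measurable N" by (rule assms)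
  have "(\<lambda>S. X (Suc k) S - \<eta> *\<^sub>R (vsign (\<Sum>j<n. V (Suc k) S j) + wd *\<^sub>R X (Suc k) S)) \<in> borel_measurable N"
    by measurable
  then show ?thesis by (simp add: X_SS[abs_def])
qed

lemma meas_all: "I (Suc k) \<subseteq> J \<Longrightarrow> X (Suc k) \<in> borel_measurable (PiM J Dk) \<and>
   (\<forall>j<n. (\<lambda>S. Mm (Suc k) S j) \<in> borel_measurable (PiM J Dk) \<and> (\<lambda>S. V (Suc k) S j) \<in> borel_measurable (PiM J Dk))"
proof (induction k)
  case 0
  have "(\<lambda>S. (1 / real B0) *\<^sub>R (\<Sum>i<B0. g j x1 (S (1, j, i)))) \<in> borel_measurable (PiM J Dk)" if j: "j < n" for j
  proof -
    have "(\<lambda>S. g j x1 (S (1, j, i))) \<in> borel_measurable (PiM J Dk)" if i: "i < B0" for i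
      by (rule gcomp[OF j borel_measurable_const comp_key]) (use I_1[OF j i] 0 I_sub in auto)
    then show ?thesis by (intro borel_measurable_scaleR borel_measurable_const borel_measurable_sum) auto
  qed
  then show ?case by (simp add: X_1 Mm_1[abs_def] V_1[abs_def])
next
  case (Suc k)
  have IJ: "I (Suc k) \<subseteq> J" using Suc.prems I_mono[of "Suc k" "Suc (Suc k)"] by auto
  note IH = Suc.IH[OF IJ]
  have mX: "X (Suc (Suc k)) \<in> borel_measurable (PiM J Dk)" by (rule Xnext_meas) (use IH in auto)
  have "(\<lambda>S. Mm (Suc (Suc k)) S j) \<in> borel_measurable (PiM J Dk) \<and> (\<lambda>S. V (Suc (Suc k)) S j) \<in> borel_measurable (PiM J Dk)"
    if j: "j < n" for j
  proof -
    have key: "(\<lambda>S. S (Suc (Suc k), j, 0)) \<in> measurable (PiM J Dk) (D j)"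
      by (rule comp_key) (use I_SS[OF j] Suc.prems key_samples[OF j] in auto)
    have [measurable]: "(\<lambda>S. g j (X (Suc (Suc k)) S) (S (Suc (Suc k), j, 0))) \<in> borel_measurable (PiM J Dk)"
      by (rule gcomp[OF j mX key])
    have [measurable]: "(\<lambda>S. g j (X (Suc k) S) (S (Suc (Suc k), j, 0))) \<in> borel_measurable (PiM J Dk)"
      by (rule gcomp[OF j _ key]) (use IH in auto)
    have [measurable]: "(\<lambda>S. Mm (Suc k) S j) \<in> borel_measurable (PiM J Dk)" using IH j by auto
    show ?thesis unfolding Mm_SS[abs_def] V_SS[abs_def] by (intro conjI) measurable
  qed
  with mX show ?case by blast
qed

lemma meas_X: "I (Suc k) \<subseteq> J \<Longrightarrow> X (Suc k) \<in> borel_measurable (PiM J Dk)" using meas_all by blast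
lemma meas_Mm: "I (Suc k) \<subseteq> J \<Longrightarrow> j < n \<Longrightarrow> (\<lambda>S. Mm (Suc k) S j) \<in> borel_measurable (PiM J Dk)" using meas_all by blast
lemma meas_V: "I (Suc k) \<subseteq> J \<Longrightarrow> j < n \<Longrightarrow> (\<lambda>S. V (Suc k) S j) \<in> borel_measurable (PiM J Dk)" using meas_all by blast
lemma meas_Xnext: "I (Suc k) \<subseteq> J \<Longrightarrow> X (Suc (Suc k)) \<in> borel_measurable (PiM J Dk)"
  by (rule Xnext_meas) (auto intro: meas_X meas_V)


lemma ewd: "0 \<le> \<eta> * wd" "\<eta> * wd * (2 * real T) \<le> 1"
proof -
  show "0 \<le> \<eta> * wd" using eta lam by simp
  have "wd * (2 * \<eta> * real T) \<le> 1" using lam eta T by (simp add: field_simps)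
  then show "\<eta> * wd * (2 * real T) \<le> 1" by (simp add: algebra_simps)
qed

lemma X_coord: "\<bar>X (Suc k) S $ i\<bar> \<le> real (Suc k) * \<eta>"
proof (induction k)
  case 0
  then show ?case using x1 by (simp add: X_1)
next
  case (Suc k)
  let ?x = "X (Suc k) S $ i" and ?s = "sgn ((\<Sum>j<n. V (Suc k) S j) $ i)"
  have eq: "X (Suc (Suc k)) S $ i = (1 - \<eta> * wd) * ?x - \<eta> * ?s"
    by (simp add: X_SS vsign_def algebra_simps)
  have s1: "\<bar>?s\<bar> \<le> 1" by (simp add: abs_sgn_eq)
  have ew1: "\<eta> * wd \<le> 1"
  proof -
    have "\<eta> * wd * 1 \<le> \<eta> * wd * (2 * real T)" by (rule mult_left_mono) (use T ewd in auto)
    then show ?thesis using ewd by linarith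
  qed
  have "\<bar>(1 - \<eta> * wd) * ?x - \<eta> * ?s\<bar> \<le> (1 - \<eta> * wd) * \<bar>?x\<bar> + \<eta> * \<bar>?s\<bar>"
  proof -
    have "\<bar>(1 - \<eta> * wd) * ?x - \<eta> * ?s\<bar> \<le> \<bar>(1 - \<eta> * wd) * ?x\<bar> + \<bar>\<eta> * ?s\<bar>"
      by (rule abs_triangle_ineq4)
    also have "\<bar>(1 - \<eta> * wd) * ?x\<bar> = (1 - \<eta> * wd) * \<bar>?x\<bar>"
      using ew1 by (simp add: abs_mult)
    also have "\<bar>\<eta> * ?s\<bar> = \<eta> * \<bar>?s\<bar>" using eta by (simp add: abs_mult)
    finally show ?thesis .
  qed
  also have "\<dots> \<le> \<bar>?x\<bar> + \<eta>"
  proof -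
    have h1: "0 \<le> \<eta> * wd * \<bar>?x\<bar>" using ewd by simp
    have h2: "\<eta> * \<bar>?s\<bar> \<le> \<eta>" using s1 eta by (simp add: mult_left_le)
    have h3: "(1 - \<eta> * wd) * \<bar>?x\<bar> = \<bar>?x\<bar> - \<eta> * wd * \<bar>?x\<bar>" by (simp add: algebra_simps)
    show ?thesis using h1 h2 h3 by linarith
  qed
  also have "\<dots> \<le> real (Suc k) * \<eta> + \<eta>" using Suc.IH by simp
  finally show ?case by (simp add: eq algebra_simps)
qed

lemma X_incr:
  assumes k: "Suc (Suc k) \<le> T"
  shows "(norm (X (Suc (Suc k)) S - X (Suc k) S))\<^sup>2 \<le> 4 * \<eta>\<^sup>2 * real CARD('d)"
proof -
  define z where "z = X (Suc (Suc k)) S - X (Suc k) S"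
  have zi: "\<bar>z $ i\<bar> \<le> 2 * \<eta>" for i
  proof -
    let ?x = "X (Suc k) S $ i" and ?s = "sgn ((\<Sum>j<n. V (Suc k) S j) $ i)"
    have eq: "z $ i = - \<eta> * (?s + wd * ?x)"
      by (simp add: z_def X_SS vsign_def algebra_simps)
    have s1: "\<bar>?s\<bar> \<le> 1" by (simp add: abs_sgn_eq)
    have "\<bar>wd * ?x\<bar> \<le> wd * (real (Suc k) * \<eta>)"
      using X_coord[of k S i] lam by (simp add: abs_mult mult_left_mono)
    also have "\<dots> = (\<eta> * wd) * real (Suc k)" by simp
    also have "\<dots> \<le> (\<eta> * wd) * (2 * real T)"
      using ewd k by (intro mult_left_mono) auto
    also have "\<dots> \<le> 1" using ewd by simp
    finally have "\<bar>?s + wd * ?x\<bar> \<le> 2" using s1 by linarith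
    then show ?thesis using eta by (simp add: eq abs_mult)
  qed
  have "(norm z)\<^sup>2 = z \<bullet> z" by (rule power2_norm_eq_inner)
  also have "\<dots> = (\<Sum>i\<in>UNIV. (z $ i)\<^sup>2)"
    by (simp add: inner_vec_def power2_eq_square)
  also have "\<dots> \<le> (\<Sum>i\<in>(UNIV::'d set). 4 * \<eta>\<^sup>2)"
  proof (rule sum_mono)
    fix i
    have "(z $ i)\<^sup>2 = \<bar>z $ i\<bar>\<^sup>2" by simp
    also have "\<dots> \<le> (2 * \<eta>)\<^sup>2" by (rule power_mono[OF zi]) simp
    finally show "(z $ i)\<^sup>2 \<le> 4 * \<eta>\<^sup>2" by (simp add: power_mult_distrib)
  qed
  also have "\<dots> = 4 * \<eta>\<^sup>2 * real CARD('d)" by simp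
  finally show ?thesis unfolding z_def .
qed

end



lemma ennreal_lin2:
  fixes a b x y :: real
  assumes "0 \<le> a" "0 \<le> b" "0 \<le> x" "0 \<le> y"
  shows "ennreal (a * x + b * y) = ennreal a * ennreal x + ennreal b * ennreal y"
proof -
  have "ennreal (a * x + b * y) = ennreal (a * x) + ennreal (b * y)"
    by (rule ennreal_plus) (use assms in auto)
  then show ?thesis using assms by (simp add: ennreal_mult)
qed

context lionalg begin

lemma gm1: "j < n \<Longrightarrow> g j x \<in> borel_measurable (D j)"
  using D3_int by (rule borel_measurable_integrable)

lemma node_int: "j < n \<Longrightarrow> integrable (D j) (\<lambda>s. c *\<^sub>R ((g j x s - gradf j x) - a *\<^sub>R (g j y s - gradf j y)))"
proof -
  assume j: "j < n"
  interpret Dj: prob_space "D j" using D[OF j] .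
  show ?thesis using D3_int[OF j] by auto
qed

lemma node_mean: "j < n \<Longrightarrow> (\<integral>s. c *\<^sub>R ((g j x s - gradf j x) - a *\<^sub>R (g j y s - gradf j y)) \<partial>D j) = 0"
proof -
  assume j: "j < n"
  interpret Dj: prob_space "D j" using D[OF j] .
  have i1: "integrable (D j) (\<lambda>s. g j x s - gradf j x)" "integrable (D j) (\<lambda>s. a *\<^sub>R (g j y s - gradf j y))"
    using D3_int[OF j] by auto
  have m1: "(\<integral>s. g j x s - gradf j x \<partial>D j) = 0" "(\<integral>s. g j y s - gradf j y \<partial>D j) = 0"
    using D3_int[OF j] D3_mean[OF j] by (simp_all add: Dj.prob_space)
  show ?thesis using i1 m1 by (simp add: Bochner_Integration.integral_diff[OF i1])
qed

lemma node_bnd: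
  assumes j: "j < n" and b: "0 \<le> b" "b \<le> 1"
  shows "(\<integral>\<^sup>+s. ennreal ((norm (c *\<^sub>R ((g j x s - gradf j x) - (1 - b) *\<^sub>R (g j y s - gradf j y))))\<^sup>2) \<partial>D j)
         \<le> ennreal (c\<^sup>2 * (2 * b\<^sup>2 * \<sigma>\<^sup>2 + 2 * L\<^sup>2 * (norm (x - y))\<^sup>2))"
proof -
  interpret Dj: prob_space "D j" using D[OF j] .
  have [measurable]: "g j x \<in> borel_measurable (D j)" "g j y \<in> borel_measurable (D j)" using gm1[OF j] by auto
  define \<delta> where "\<delta> = gradf j x - gradf j y"
  define C1 where "C1 = c\<^sup>2 * 2 * b\<^sup>2"
  define C2 where "C2 = c\<^sup>2 * 2 * (1 - b)\<^sup>2"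
  have C: "0 \<le> C1" "0 \<le> C2" unfolding C1_def C2_def by auto
  have pt: "(norm (c *\<^sub>R ((g j x s - gradf j x) - (1 - b) *\<^sub>R (g j y s - gradf j y))))\<^sup>2
       \<le> C1 * (norm (g j x s - gradf j x))\<^sup>2 + C2 * (norm ((g j x s - g j y s) - \<delta>))\<^sup>2" for s
  proof -
    have e: "(g j x s - gradf j x) - (1 - b) *\<^sub>R (g j y s - gradf j y)
       = b *\<^sub>R (g j x s - gradf j x) + (1 - b) *\<^sub>R ((g j x s - g j y s) - \<delta>)"
      unfolding \<delta>_def by (simp add: algebra_simps)
    have "(norm (c *\<^sub>R ((g j x s - gradf j x) - (1 - b) *\<^sub>R (g j y s - gradf j y))))\<^sup>2
        = c\<^sup>2 * (norm (b *\<^sub>R (g j x s - gradf j x) + (1 - b) *\<^sub>R ((g j x s - g j y s) - \<delta>)))\<^sup>2"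
      unfolding e by (simp add: power_mult_distrib)
    also have "\<dots> \<le> c\<^sup>2 * (2 * (norm (b *\<^sub>R (g j x s - gradf j x)))\<^sup>2 + 2 * (norm ((1 - b) *\<^sub>R ((g j x s - g j y s) - \<delta>)))\<^sup>2)"
      by (intro mult_left_mono sq_add_le) simp
    also have "\<dots> = C1 * (norm (g j x s - gradf j x))\<^sup>2 + C2 * (norm ((g j x s - g j y s) - \<delta>))\<^sup>2"
      unfolding C1_def C2_def by (simp only: norm_scaleR power_mult_distrib power2_abs) (simp add: algebra_simps)
    finally show ?thesis .
  qed
  have var: "(\<integral>\<^sup>+s. ennreal ((norm ((g j x s - g j y s) - \<delta>))\<^sup>2) \<partial>D j) \<le> ennreal (L\<^sup>2 * (norm (x - y))\<^sup>2)"
  proof -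
    have ii: "integrable (D j) (\<lambda>s. (g j x s - g j y s) - \<delta>)" using D3_int[OF j] by auto
    have mm: "(\<integral>s. (g j x s - g j y s) - \<delta> \<partial>D j) = 0"
      using D3_int[OF j] D3_mean[OF j] unfolding \<delta>_def by (simp add: Dj.prob_space)
    have "(\<integral>\<^sup>+s. ennreal ((norm ((g j x s - g j y s) - \<delta>))\<^sup>2) \<partial>D j)
        \<le> ennreal ((norm \<delta>)\<^sup>2) + (\<integral>\<^sup>+s. ennreal ((norm ((g j x s - g j y s) - \<delta>))\<^sup>2) \<partial>D j)" by simp
    also have "\<dots> = (\<integral>\<^sup>+s. ennreal ((norm (\<delta> + ((g j x s - g j y s) - \<delta>)))\<^sup>2) \<partial>D j)"
      by (rule expand_sq[OF Dj.prob_space_axioms ii mm, symmetric])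
    also have "\<dots> = (\<integral>\<^sup>+s. ennreal ((norm (g j x s - g j y s))\<^sup>2) \<partial>D j)" by simp
    also have "\<dots> \<le> ennreal (L\<^sup>2 * (norm (x - y))\<^sup>2)" by (rule D2[OF j])
    finally show ?thesis .
  qed
  have "(\<integral>\<^sup>+s. ennreal ((norm (c *\<^sub>R ((g j x s - gradf j x) - (1 - b) *\<^sub>R (g j y s - gradf j y))))\<^sup>2) \<partial>D j)
      \<le> (\<integral>\<^sup>+s. ennreal C1 * ennreal ((norm (g j x s - gradf j x))\<^sup>2) + ennreal C2 * ennreal ((norm ((g j x s - g j y s) - \<delta>))\<^sup>2) \<partial>D j)"
  proof (rule nn_integral_mono)
    fix s
    have "ennreal ((norm (c *\<^sub>R ((g j x s - gradf j x) - (1 - b) *\<^sub>R (g j y s - gradf j y))))\<^sup>2)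
        \<le> ennreal (C1 * (norm (g j x s - gradf j x))\<^sup>2 + C2 * (norm ((g j x s - g j y s) - \<delta>))\<^sup>2)"
      by (rule ennreal_leI[OF pt])
    also have "\<dots> = ennreal C1 * ennreal ((norm (g j x s - gradf j x))\<^sup>2) + ennreal C2 * ennreal ((norm ((g j x s - g j y s) - \<delta>))\<^sup>2)"
      using C by (intro ennreal_lin2) auto
    finally show "ennreal ((norm (c *\<^sub>R ((g j x s - gradf j x) - (1 - b) *\<^sub>R (g j y s - gradf j y))))\<^sup>2)
        \<le> ennreal C1 * ennreal ((norm (g j x s - gradf j x))\<^sup>2) + ennreal C2 * ennreal ((norm ((g j x s - g j y s) - \<delta>))\<^sup>2)" .
  qed
  also have "\<dots> = ennreal C1 * (\<integral>\<^sup>+s. ennreal ((norm (g j x s - gradf j x))\<^sup>2) \<partial>D j)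
      + ennreal C2 * (\<integral>\<^sup>+s. ennreal ((norm ((g j x s - g j y s) - \<delta>))\<^sup>2) \<partial>D j)"
    by (simp add: nn_integral_add nn_integral_cmult)
  also have "\<dots> \<le> ennreal C1 * ennreal (\<sigma>\<^sup>2) + ennreal C2 * ennreal (L\<^sup>2 * (norm (x - y))\<^sup>2)"
    by (intro add_mono mult_left_mono D3_var[OF j] var) auto
  also have "\<dots> = ennreal (C1 * \<sigma>\<^sup>2 + C2 * (L\<^sup>2 * (norm (x - y))\<^sup>2))"
    using C by (intro ennreal_lin2[symmetric]) auto
  also have "\<dots> \<le> ennreal (c\<^sup>2 * (2 * b\<^sup>2 * \<sigma>\<^sup>2 + 2 * L\<^sup>2 * (norm (x - y))\<^sup>2))"
  proof (rule ennreal_leI)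
    have "(1 - b)\<^sup>2 \<le> 1" using b by (simp add: power_le_one)
    then have "C2 * (L\<^sup>2 * (norm (x - y))\<^sup>2) \<le> (c\<^sup>2 * 2) * (L\<^sup>2 * (norm (x - y))\<^sup>2)"
      unfolding C2_def by (intro mult_right_mono) (auto intro: mult_left_le)
    then show "C1 * \<sigma>\<^sup>2 + C2 * (L\<^sup>2 * (norm (x - y))\<^sup>2) \<le> c\<^sup>2 * (2 * b\<^sup>2 * \<sigma>\<^sup>2 + 2 * L\<^sup>2 * (norm (x - y))\<^sup>2)"
      unfolding C1_def by (simp add: algebra_simps)
  qed
  finally show ?thesis .
qed

end



lemma avg_split:
  fixes u z :: "nat \<Rightarrow> 'a::real_vector"
  shows "c *\<^sub>R (\<Sum>j<n. a *\<^sub>R u j + z j) = a *\<^sub>R (c *\<^sub>R (\<Sum>j<n. u j)) + (\<Sum>j<n. c *\<^sub>R z j)"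
  by (simp add: sum.distrib scaleR_add_right scaleR_sum_right ac_simps)

context lionalg begin

definition Em where "Em t S = (1 / real n) *\<^sub>R (\<Sum>j<n. Mm t S j) - (1 / real n) *\<^sub>R (\<Sum>j<n. gradf j (X t S))"
definition Ev where "Ev t S = (1 / real n) *\<^sub>R (\<Sum>j<n. V t S j) - (1 / real n) *\<^sub>R (\<Sum>j<n. gradf j (X t S))"
definition phi where "phi b k j S s = (1 / real n) *\<^sub>R ((g j (X (Suc (Suc k)) S) s - gradf j (X (Suc (Suc k)) S))
      - (1 - b) *\<^sub>R (g j (X (Suc k) S) s - gradf j (X (Suc k) S)))"
definition psi where "psi j s = (1 / (real n * real B0)) *\<^sub>R (g j x1 s - gradf j x1)"

lemma Em_alt: "Em t S = (1 / real n) *\<^sub>R (\<Sum>j<n. Mm t S j - gradf j (X t S))"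
  by (simp add: Em_def sum_subtractf scaleR_diff_right)
lemma Ev_alt: "Ev t S = (1 / real n) *\<^sub>R (\<Sum>j<n. V t S j - gradf j (X t S))"
  by (simp add: Ev_def sum_subtractf scaleR_diff_right)

lemma Em_SS: "Em (Suc (Suc k)) S = (1 - \<beta>2) *\<^sub>R Em (Suc k) S + (\<Sum>j<n. phi \<beta>2 k j S (S (Suc (Suc k), j, 0)))"
proof -
  let ?Z = "\<lambda>j. (g j (X (Suc (Suc k)) S) (S (Suc (Suc k), j, 0)) - gradf j (X (Suc (Suc k)) S))
      - (1 - \<beta>2) *\<^sub>R (g j (X (Suc k) S) (S (Suc (Suc k), j, 0)) - gradf j (X (Suc k) S))"
  have pj: "Mm (Suc (Suc k)) S j - gradf j (X (Suc (Suc k)) S) = (1 - \<beta>2) *\<^sub>R (Mm (Suc k) S j - gradf j (X (Suc k) S)) + ?Z j" for j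
    by (simp add: Mm_SS algebra_simps)
  have "Em (Suc (Suc k)) S = (1 / real n) *\<^sub>R (\<Sum>j<n. (1 - \<beta>2) *\<^sub>R (Mm (Suc k) S j - gradf j (X (Suc k) S)) + ?Z j)"
    unfolding Em_alt pj ..
  also have "\<dots> = (1 - \<beta>2) *\<^sub>R Em (Suc k) S + (\<Sum>j<n. (1 / real n) *\<^sub>R ?Z j)"
    unfolding avg_split Em_alt ..
  finally show ?thesis by (simp add: phi_def)
qed

lemma Ev_SS: "Ev (Suc (Suc k)) S = (1 - \<beta>1) *\<^sub>R Em (Suc k) S + (\<Sum>j<n. phi \<beta>1 k j S (S (Suc (Suc k), j, 0)))"
proof -
  let ?Z = "\<lambda>j. (g j (X (Suc (Suc k)) S) (S (Suc (Suc k), j, 0)) - gradf j (X (Suc (Suc k)) S))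
      - (1 - \<beta>1) *\<^sub>R (g j (X (Suc k) S) (S (Suc (Suc k), j, 0)) - gradf j (X (Suc k) S))"
  have pj: "V (Suc (Suc k)) S j - gradf j (X (Suc (Suc k)) S) = (1 - \<beta>1) *\<^sub>R (Mm (Suc k) S j - gradf j (X (Suc k) S)) + ?Z j" for j
    by (simp add: V_SS algebra_simps)
  have "Ev (Suc (Suc k)) S = (1 / real n) *\<^sub>R (\<Sum>j<n. (1 - \<beta>1) *\<^sub>R (Mm (Suc k) S j - gradf j (X (Suc k) S)) + ?Z j)"
    unfolding Ev_alt pj ..
  also have "\<dots> = (1 - \<beta>1) *\<^sub>R Em (Suc k) S + (\<Sum>j<n. (1 / real n) *\<^sub>R ?Z j)"
    unfolding avg_split Em_alt ..
  finally show ?thesis by (simp add: phi_def)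
qed

lemma Ev_1: "Ev (Suc 0) S = Em (Suc 0) S"
  by (simp add: Ev_def Em_def V_1 Mm_1)

lemma Em_1: "Em (Suc 0) S = (\<Sum>j<n. \<Sum>i<B0. psi j (S (1, j, i)))"
proof -
  have B0r: "real B0 \<noteq> 0" using B0 by simp
  have pj: "Mm (Suc 0) S j - gradf j (X (Suc 0) S) = (1 / real B0) *\<^sub>R (\<Sum>i<B0. g j x1 (S (1, j, i)) - gradf j x1)" for j
    using B0r by (simp add: Mm_1 X_1 sum_subtractf scaleR_diff_right sum_constant_scaleR del: sum_constant)
  show ?thesis unfolding Em_alt pj psi_def
    by (simp add: scaleR_sum_right)
qed

end



context lionalg begin

lemma gX_meas: "I (Suc k) \<subseteq> J \<Longrightarrow> j < n \<Longrightarrow> (\<lambda>S. gradf j (X (Suc k) S)) \<in> borel_measurable (PiM J Dk)"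
  using measurable_compose[OF meas_X gradf_meas] by blast

lemma gXn_meas: "I (Suc k) \<subseteq> J \<Longrightarrow> j < n \<Longrightarrow> (\<lambda>S. gradf j (X (Suc (Suc k)) S)) \<in> borel_measurable (PiM J Dk)"
  using measurable_compose[OF meas_Xnext gradf_meas] by blast

lemma meas_Em: "I (Suc k) \<subseteq> J \<Longrightarrow> Em (Suc k) \<in> borel_measurable (PiM J Dk)"
  unfolding Em_def[abs_def]
  by (intro borel_measurable_diff borel_measurable_scaleR borel_measurable_const borel_measurable_sum meas_Mm gX_meas) auto

lemma meas_Ev: "I (Suc k) \<subseteq> J \<Longrightarrow> Ev (Suc k) \<in> borel_measurable (PiM J Dk)"
  unfolding Ev_def[abs_def]
  by (intro borel_measurable_diff borel_measurable_scaleR borel_measurable_const borel_measurable_sum meas_V gX_meas) auto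

lemma dep_Em: "depends_on (I (Suc k)) (Em (Suc k))"
  unfolding depends_on_def
proof (intro allI impI)
  fix S S' :: "nat \<times> nat \<times> nat \<Rightarrow> 's" assume h: "\<forall>i\<in>I (Suc k). S i = S' i"
  have "X (Suc k) S = X (Suc k) S'" using dep_X h depends_onD by blast
  moreover have "(\<Sum>j<n. Mm (Suc k) S j) = (\<Sum>j<n. Mm (Suc k) S' j)"
    using dep_Mm h depends_onD by (intro sum.cong) blast+
  ultimately show "Em (Suc k) S = Em (Suc k) S'" by (simp add: Em_def)
qed

lemma dep_Ev: "depends_on (I (Suc k)) (Ev (Suc k))"
  unfolding depends_on_def
proof (intro allI impI)
  fix S S' :: "nat \<times> nat \<times> nat \<Rightarrow> 's" assume h: "\<forall>i\<in>I (Suc k). S i = S' i"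
  have "X (Suc k) S = X (Suc k) S'" using dep_X h depends_onD by blast
  moreover have "(\<Sum>j<n. V (Suc k) S j) = (\<Sum>j<n. V (Suc k) S' j)"
    using dep_V h depends_onD by (intro sum.cong) blast+
  ultimately show "Ev (Suc k) S = Ev (Suc k) S'" by (simp add: Ev_def)
qed

lemma dep_phi: "depends_on (I (Suc k)) (phi b k j)"
  unfolding depends_on_def
proof (intro allI impI)
  fix S S' :: "nat \<times> nat \<times> nat \<Rightarrow> 's" assume h: "\<forall>i\<in>I (Suc k). S i = S' i"
  have "X (Suc k) S = X (Suc k) S'" using dep_X h depends_onD by blast
  moreover have "X (Suc (Suc k)) S = X (Suc (Suc k)) S'" using dep_Xnext h depends_onD by blast
  ultimately show "phi b k j S = phi b k j S'" by (simp add: phi_def[abs_def])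
qed

lemma phi_meas:
  assumes j: "j < n" and J: "I (Suc k) \<subseteq> J"
  shows "(\<lambda>p. phi b k j (fst p) (snd p)) \<in> borel_measurable (PiM J Dk \<Otimes>\<^sub>M D j)"
proof -
  have f1: "(\<lambda>p. X (Suc (Suc k)) (fst p)) \<in> borel_measurable (PiM J Dk \<Otimes>\<^sub>M D j)"
    by (rule measurable_compose[OF measurable_fst meas_Xnext[OF J]])
  have f2: "(\<lambda>p. X (Suc k) (fst p)) \<in> borel_measurable (PiM J Dk \<Otimes>\<^sub>M D j)"
    by (rule measurable_compose[OF measurable_fst meas_X[OF J]])
  have [measurable]: "(\<lambda>p. g j (X (Suc (Suc k)) (fst p)) (snd p)) \<in> borel_measurable (PiM J Dk \<Otimes>\<^sub>M D j)"
    by (rule gcomp[OF j f1 measurable_snd])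
  have [measurable]: "(\<lambda>p. g j (X (Suc k) (fst p)) (snd p)) \<in> borel_measurable (PiM J Dk \<Otimes>\<^sub>M D j)"
    by (rule gcomp[OF j f2 measurable_snd])
  have [measurable]: "(\<lambda>p. gradf j (X (Suc (Suc k)) (fst p))) \<in> borel_measurable (PiM J Dk \<Otimes>\<^sub>M D j)"
    by (rule measurable_compose[OF measurable_fst gXn_meas[OF J j]])
  have [measurable]: "(\<lambda>p. gradf j (X (Suc k) (fst p))) \<in> borel_measurable (PiM J Dk \<Otimes>\<^sub>M D j)"
    by (rule measurable_compose[OF measurable_fst gX_meas[OF J j]])
  show ?thesis unfolding phi_def by measurable
qed

end



context lionalg begin

lemma Em_sq_meas: "(\<lambda>\<omega>. ennreal ((norm (Em (Suc k) (\<lambda>i. xi i \<omega>)))\<^sup>2)) \<in> borel_measurable M"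
proof -
  have d: "depends_on (I (Suc k)) (\<lambda>S. ennreal ((norm (Em (Suc k) S))\<^sup>2))"
    unfolding depends_on_def using depends_onD[OF dep_Em] by metis
  have m: "(\<lambda>S. ennreal ((norm (Em (Suc k) S))\<^sup>2)) \<in> borel_measurable (PiM (I (Suc k)) Dk)"
    using meas_Em[of k "I (Suc k)"] by measurable
  show ?thesis using meas_M[OF I_sub d m] .
qed

lemma Ev_sq_meas: "(\<lambda>\<omega>. ennreal ((norm (Ev (Suc k) (\<lambda>i. xi i \<omega>)))\<^sup>2)) \<in> borel_measurable M"
proof -
  have d: "depends_on (I (Suc k)) (\<lambda>S. ennreal ((norm (Ev (Suc k) S))\<^sup>2))"
    unfolding depends_on_def using depends_onD[OF dep_Ev] by metis
  have m: "(\<lambda>S. ennreal ((norm (Ev (Suc k) S))\<^sup>2)) \<in> borel_measurable (PiM (I (Suc k)) Dk)"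
    using meas_Ev[of k "I (Suc k)"] by measurable
  show ?thesis using meas_M[OF I_sub d m] .
qed

lemma A_step:
  assumes k: "Suc (Suc k) \<le> T" and b: "0 < b" "b \<le> 1"
  shows "(\<integral>\<^sup>+\<omega>. ennreal ((norm ((1 - b) *\<^sub>R Em (Suc k) (\<lambda>i. xi i \<omega>)
            + (\<Sum>j<n. phi b k j (\<lambda>i. xi i \<omega>) (xi (Suc (Suc k), j, 0) \<omega>))))\<^sup>2) \<partial>M)
     \<le> ennreal ((1 - b)\<^sup>2) * (\<integral>\<^sup>+\<omega>. ennreal ((norm (Em (Suc k) (\<lambda>i. xi i \<omega>)))\<^sup>2) \<partial>M)
       + ennreal ((2 * b\<^sup>2 * \<sigma>\<^sup>2 + 8 * L\<^sup>2 * \<eta>\<^sup>2 * real CARD('d)) / real n)"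
proof -
  define Ks where "Ks = (\<lambda>j. (Suc (Suc k), j, 0::nat)) ` {..<n}"
  define \<phi> where "\<phi> = (\<lambda>key::nat \<times> nat \<times> nat. phi b k (fst (snd key)))"
  define C where "C = 2 * b\<^sup>2 * \<sigma>\<^sup>2 + 8 * L\<^sup>2 * \<eta>\<^sup>2 * real CARD('d)"
  define Kc where "Kc = C / (real n)\<^sup>2"
  define W0 where "W0 S = (1 - b) *\<^sub>R Em (Suc k) S" for S
  have C0: "0 \<le> C" unfolding C_def by simp
  have Kc0: "0 \<le> Kc" unfolding Kc_def using C0 by simp
  have finKs: "finite Ks" unfolding Ks_def by simp
  have KsA: "Ks \<subseteq> lion_samples n B0" unfolding Ks_def using key_samples by auto
  have KsI: "Ks \<inter> I (Suc k) = {}" unfolding Ks_def using key_notin by auto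
  have keyD: "Dk key = D (fst (snd key))" "fst (snd key) < n" if "key \<in> Ks" for key
  proof -
    have "key \<in> lion_samples n B0" using that KsA by auto
    then show "Dk key = D (fst (snd key))" "fst (snd key) < n" by (rule Dk_eq, rule samples_n)
  qed
  have depW: "depends_on (I (Suc k)) W0"
    unfolding depends_on_def W0_def using depends_onD[OF dep_Em] by metis
  have Wm: "W0 \<in> borel_measurable (PiM J Dk)" if "I (Suc k) \<subseteq> J" for J
    unfolding W0_def[abs_def] by (intro borel_measurable_scaleR borel_measurable_const meas_Em that)
  have dep\<phi>: "depends_on (I (Suc k)) (\<phi> key)" for key
    unfolding \<phi>_def by (simp add: dep_phi)
  have \<phi>m: "(\<lambda>p. \<phi> key (fst p) (snd p)) \<in> borel_measurable (PiM J Dk \<Otimes>\<^sub>M Dk key)"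
    if "key \<in> Ks" "I (Suc k) \<subseteq> J" for key J
    unfolding \<phi>_def using phi_meas[OF keyD(2)[OF that(1)] that(2)] keyD[OF that(1)] by simp
  have int: "integrable (Dk key) (\<phi> key S)" if "key \<in> Ks" for key S
    unfolding \<phi>_def keyD[OF that] phi_def[abs_def] using node_int[OF keyD(2)[OF that]] by simp
  have mean: "(\<integral>s. \<phi> key S s \<partial>Dk key) = 0" if "key \<in> Ks" for key S
    unfolding \<phi>_def keyD[OF that] phi_def by (rule node_mean[OF keyD(2)[OF that]])
  have bnd: "(\<integral>\<^sup>+s. ennreal ((norm (\<phi> key S s))\<^sup>2) \<partial>Dk key) \<le> ennreal Kc" if "key \<in> Ks" for key S
  proof -
    have "(\<integral>\<^sup>+s. ennreal ((norm (\<phi> key S s))\<^sup>2) \<partial>Dk key)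
       \<le> ennreal ((1 / real n)\<^sup>2 * (2 * b\<^sup>2 * \<sigma>\<^sup>2 + 2 * L\<^sup>2 * (norm (X (Suc (Suc k)) S - X (Suc k) S))\<^sup>2))"
      unfolding \<phi>_def keyD[OF that] phi_def by (rule node_bnd[OF keyD(2)[OF that]]) (use b in auto)
    also have "\<dots> \<le> ennreal Kc"
    proof (rule ennreal_leI)
      have "2 * L\<^sup>2 * (norm (X (Suc (Suc k)) S - X (Suc k) S))\<^sup>2 \<le> 2 * L\<^sup>2 * (4 * \<eta>\<^sup>2 * real CARD('d))"
        using X_incr[OF k, of S] by (intro mult_left_mono) auto
      then have "2 * b\<^sup>2 * \<sigma>\<^sup>2 + 2 * L\<^sup>2 * (norm (X (Suc (Suc k)) S - X (Suc k) S))\<^sup>2 \<le> C"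
        unfolding C_def by simp
      then show "(1 / real n)\<^sup>2 * (2 * b\<^sup>2 * \<sigma>\<^sup>2 + 2 * L\<^sup>2 * (norm (X (Suc (Suc k)) S - X (Suc k) S))\<^sup>2) \<le> Kc"
        unfolding Kc_def by (simp add: divide_right_mono power_one_over)
    qed
    finally show ?thesis .
  qed
  have main: "(\<integral>\<^sup>+\<omega>. ennreal ((norm (W0 (\<lambda>i. xi i \<omega>) + (\<Sum>key\<in>Ks. \<phi> key (\<lambda>i. xi i \<omega>) (xi key \<omega>))))\<^sup>2) \<partial>M)
         \<le> (\<integral>\<^sup>+\<omega>. ennreal ((norm (W0 (\<lambda>i. xi i \<omega>)))\<^sup>2) \<partial>M) + ennreal (real (card Ks) * Kc)"
    by (rule iter[OF finKs order_refl KsA KsI I_finite I_sub depW Wm dep\<phi> \<phi>m int mean bnd Kc0])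
  have sumeq: "(\<Sum>key\<in>Ks. \<phi> key S (S' key)) = (\<Sum>j<n. phi b k j S (S' (Suc (Suc k), j, 0)))" for S S'
    unfolding Ks_def \<phi>_def by (subst sum.reindex) (auto simp: inj_on_def)
  have cardKs: "card Ks = n" unfolding Ks_def by (subst card_image) (auto simp: inj_on_def)
  have nK: "real (card Ks) * Kc = C / real n"
    unfolding cardKs Kc_def using n by (simp add: power2_eq_square)
  have W0eq: "(\<integral>\<^sup>+\<omega>. ennreal ((norm (W0 (\<lambda>i. xi i \<omega>)))\<^sup>2) \<partial>M)
      = ennreal ((1 - b)\<^sup>2) * (\<integral>\<^sup>+\<omega>. ennreal ((norm (Em (Suc k) (\<lambda>i. xi i \<omega>)))\<^sup>2) \<partial>M)"
  proof -
    have "(\<integral>\<^sup>+\<omega>. ennreal ((norm (W0 (\<lambda>i. xi i \<omega>)))\<^sup>2) \<partial>M)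
        = (\<integral>\<^sup>+\<omega>. ennreal ((1 - b)\<^sup>2) * ennreal ((norm (Em (Suc k) (\<lambda>i. xi i \<omega>)))\<^sup>2) \<partial>M)"
      unfolding W0_def by (intro nn_integral_cong) (simp add: power_mult_distrib ennreal_mult)
    also have "\<dots> = ennreal ((1 - b)\<^sup>2) * (\<integral>\<^sup>+\<omega>. ennreal ((norm (Em (Suc k) (\<lambda>i. xi i \<omega>)))\<^sup>2) \<partial>M)"
      by (rule nn_integral_cmult[OF Em_sq_meas])
    finally show ?thesis .
  qed
  show ?thesis using main[unfolded sumeq W0eq nK] unfolding W0_def C_def .
qed

end



context lionalg begin

lemma A_1: "(\<integral>\<^sup>+\<omega>. ennreal ((norm (Em (Suc 0) (\<lambda>i. xi i \<omega>)))\<^sup>2) \<partial>M) \<le> ennreal (\<sigma>\<^sup>2 / (real n * real B0))"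
proof -
  define Ks where "Ks = (\<lambda>p. (1::nat, fst p, snd p)) ` ({..<n} \<times> {..<B0})"
  define \<phi> where "\<phi> = (\<lambda>key::nat \<times> nat \<times> nat. \<lambda>S::nat \<times> nat \<times> nat \<Rightarrow> 's. psi (fst (snd key)))"
  define c where "c = 1 / (real n * real B0)"
  define Kc where "Kc = c\<^sup>2 * \<sigma>\<^sup>2"
  define W0 where "W0 = (\<lambda>S::nat \<times> nat \<times> nat \<Rightarrow> 's. 0::real^'d)"
  have Kc0: "0 \<le> Kc" unfolding Kc_def by simp
  have finKs: "finite Ks" unfolding Ks_def by simp
  have KsA: "Ks \<subseteq> lion_samples n B0" unfolding Ks_def lion_samples_def by auto
  have KsI: "Ks \<inter> {} = {}" by simp
  have keyD: "Dk key = D (fst (snd key))" "fst (snd key) < n" if "key \<in> Ks" for key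
  proof -
    have "key \<in> lion_samples n B0" using that KsA by auto
    then show "Dk key = D (fst (snd key))" "fst (snd key) < n" by (rule Dk_eq, rule samples_n)
  qed
  have depW: "depends_on {} W0" unfolding depends_on_def W0_def by simp
  have Wm: "W0 \<in> borel_measurable (PiM J Dk)" if "{} \<subseteq> J" for J
    unfolding W0_def by simp
  have dep\<phi>: "depends_on {} (\<phi> key)" for key
    unfolding \<phi>_def depends_on_def by simp
  have psim: "(\<lambda>p. psi j (snd p)) \<in> borel_measurable (PiM J Dk \<Otimes>\<^sub>M D j)" if j: "j < n" for j J
  proof -
    have [measurable]: "(\<lambda>p. g j x1 (snd p)) \<in> borel_measurable (PiM J Dk \<Otimes>\<^sub>M D j)"
      by (rule gcomp[OF j borel_measurable_const measurable_snd])
    show ?thesis unfolding psi_def by measurable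
  qed
  have \<phi>m: "(\<lambda>p. \<phi> key (fst p) (snd p)) \<in> borel_measurable (PiM J Dk \<Otimes>\<^sub>M Dk key)"
    if "key \<in> Ks" "{} \<subseteq> J" for key J
    unfolding \<phi>_def using psim[OF keyD(2)[OF that(1)]] keyD[OF that(1)] by simp
  have int: "integrable (Dk key) (\<phi> key S)" if "key \<in> Ks" for key S
    unfolding \<phi>_def keyD[OF that] using node_int[OF keyD(2)[OF that], of "1 / (real n * real B0)" x1 0 x1]
    by (simp add: psi_def[abs_def])
  have mean: "(\<integral>s. \<phi> key S s \<partial>Dk key) = 0" if "key \<in> Ks" for key S
    unfolding \<phi>_def keyD[OF that] using node_mean[OF keyD(2)[OF that], of "1 / (real n * real B0)" x1 0 x1]
    by (simp add: psi_def)
  have bnd: "(\<integral>\<^sup>+s. ennreal ((norm (\<phi> key S s))\<^sup>2) \<partial>Dk key) \<le> ennreal Kc" if "key \<in> Ks" for key S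
  proof -
    let ?j = "fst (snd key)"
    have j: "?j < n" by (rule keyD(2)[OF that])
    interpret Dj: prob_space "D ?j" using D[OF j] .
    have [measurable]: "g ?j x1 \<in> borel_measurable (D ?j)" by (rule gm1[OF j])
    have "(\<integral>\<^sup>+s. ennreal ((norm (\<phi> key S s))\<^sup>2) \<partial>Dk key)
        = (\<integral>\<^sup>+s. ennreal (c\<^sup>2) * ennreal ((norm (g ?j x1 s - gradf ?j x1))\<^sup>2) \<partial>D ?j)"
      unfolding \<phi>_def keyD[OF that] psi_def c_def
      by (intro nn_integral_cong) (simp only: norm_scaleR power_mult_distrib power2_abs ennreal_mult[OF zero_le_power2 zero_le_power2])
    also have "\<dots> = ennreal (c\<^sup>2) * (\<integral>\<^sup>+s. ennreal ((norm (g ?j x1 s - gradf ?j x1))\<^sup>2) \<partial>D ?j)"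
      by (rule nn_integral_cmult) measurable
    also have "\<dots> \<le> ennreal (c\<^sup>2) * ennreal (\<sigma>\<^sup>2)"
      by (intro mult_left_mono D3_var[OF j]) simp
    also have "\<dots> = ennreal Kc" unfolding Kc_def by (simp add: ennreal_mult)
    finally show ?thesis .
  qed
  have main: "(\<integral>\<^sup>+\<omega>. ennreal ((norm (W0 (\<lambda>i. xi i \<omega>) + (\<Sum>key\<in>Ks. \<phi> key (\<lambda>i. xi i \<omega>) (xi key \<omega>))))\<^sup>2) \<partial>M)
         \<le> (\<integral>\<^sup>+\<omega>. ennreal ((norm (W0 (\<lambda>i. xi i \<omega>)))\<^sup>2) \<partial>M) + ennreal (real (card Ks) * Kc)"
    by (rule iter[OF finKs order_refl KsA KsI finite.emptyI empty_subsetI depW Wm dep\<phi> \<phi>m int mean bnd Kc0])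
  have inj: "inj_on (\<lambda>p. (1::nat, fst p, snd p)) ({..<n} \<times> {..<B0})" by (auto simp: inj_on_def)
  have sumeq: "(\<Sum>key\<in>Ks. \<phi> key S (S key)) = Em (Suc 0) S" for S
    unfolding Ks_def \<phi>_def Em_1 sum.reindex[OF inj]
    by (simp add: sum.cartesian_product case_prod_beta)
  have cardKs: "card Ks = n * B0" unfolding Ks_def by (subst card_image[OF inj]) (simp add: card_cartesian_product)
  have nK: "real (card Ks) * Kc = \<sigma>\<^sup>2 / (real n * real B0)"
    unfolding cardKs Kc_def c_def using n B0 by (simp add: power2_eq_square field_simps)
  show ?thesis using main unfolding sumeq nK W0_def by simp
qed

end



context lionalg begin

definition c2 where "c2 = (2 * \<beta>2\<^sup>2 * \<sigma>\<^sup>2 + 8 * L\<^sup>2 * \<eta>\<^sup>2 * real CARD('d)) / real n"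
definition c1 where "c1 = (2 * \<beta>1\<^sup>2 * \<sigma>\<^sup>2 + 8 * L\<^sup>2 * \<eta>\<^sup>2 * real CARD('d)) / real n"

primrec aa :: "nat \<Rightarrow> real" where
  "aa 0 = \<sigma>\<^sup>2 / (real n * real B0)"
| "aa (Suc k) = (1 - \<beta>2) * aa k + c2"

lemma c2_nonneg: "0 \<le> c2" unfolding c2_def by simp
lemma c1_nonneg: "0 \<le> c1" unfolding c1_def by simp

lemma aa_nonneg: "0 \<le> aa k"
  by (induction k) (use b2 c2_nonneg in auto)

definition AA where "AA k = (\<integral>\<^sup>+\<omega>. ennreal ((norm (Em (Suc k) (\<lambda>i. xi i \<omega>)))\<^sup>2) \<partial>M)"
definition BB where "BB k = (\<integral>\<^sup>+\<omega>. ennreal ((norm (Ev (Suc k) (\<lambda>i. xi i \<omega>)))\<^sup>2) \<partial>M)"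

lemma AA_bound: "k < T \<Longrightarrow> AA k \<le> ennreal (aa k)"
proof (induction k)
  case 0
  then show ?case using A_1 by (simp add: AA_def)
next
  case (Suc k)
  have kT: "Suc (Suc k) \<le> T" using Suc.prems by simp
  have "AA (Suc k) \<le> ennreal ((1 - \<beta>2)\<^sup>2) * AA k + ennreal c2"
    unfolding AA_def Em_SS c2_def using A_step[OF kT b2] .
  also have "\<dots> \<le> ennreal ((1 - \<beta>2)\<^sup>2) * ennreal (aa k) + ennreal c2"
    using Suc.IH Suc.prems by (intro add_right_mono mult_left_mono) auto
  also have "\<dots> = ennreal ((1 - \<beta>2)\<^sup>2 * aa k + c2)"
    using aa_nonneg c2_nonneg by (simp add: ennreal_mult ennreal_plus)
  also have "\<dots> \<le> ennreal (aa (Suc k))"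
  proof (rule ennreal_leI)
    have "(1 - \<beta>2)\<^sup>2 \<le> 1 - \<beta>2" using b2 by (simp add: power2_eq_square mult_left_le)
    then have "(1 - \<beta>2)\<^sup>2 * aa k \<le> (1 - \<beta>2) * aa k" using aa_nonneg by (rule mult_right_mono)
    then show "(1 - \<beta>2)\<^sup>2 * aa k + c2 \<le> aa (Suc k)" by simp
  qed
  finally show ?case .
qed

lemma BB_0: "BB 0 = AA 0" unfolding AA_def BB_def by (simp add: Ev_1)

lemma BB_bound: "Suc (Suc k) \<le> T \<Longrightarrow> BB (Suc k) \<le> ennreal (aa k + c1)"
proof -
  assume kT: "Suc (Suc k) \<le> T"
  have "BB (Suc k) \<le> ennreal ((1 - \<beta>1)\<^sup>2) * AA k + ennreal c1"
    unfolding BB_def AA_def Ev_SS c1_def using A_step[OF kT b1] .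
  also have "\<dots> \<le> ennreal ((1 - \<beta>1)\<^sup>2) * ennreal (aa k) + ennreal c1"
    using AA_bound[of k] kT by (intro add_right_mono mult_left_mono) auto
  also have "\<dots> = ennreal ((1 - \<beta>1)\<^sup>2 * aa k + c1)"
    using aa_nonneg c1_nonneg by (simp add: ennreal_mult ennreal_plus)
  also have "\<dots> \<le> ennreal (aa k + c1)"
  proof (rule ennreal_leI)
    have "(1 - \<beta>1)\<^sup>2 \<le> 1" using b1 by (simp add: power_le_one)
    then have "(1 - \<beta>1)\<^sup>2 * aa k \<le> 1 * aa k" using aa_nonneg by (rule mult_right_mono)
    then show "(1 - \<beta>1)\<^sup>2 * aa k + c1 \<le> aa k + c1" by simp
  qed
  finally show ?thesis .
qed

lemma aa_sum_aux: "\<beta>2 * (\<Sum>k<Suc N. aa k) + (1 - \<beta>2) * aa N \<le> aa 0 + real N * c2"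
proof (induction N)
  case 0
  then show ?case by (simp del: aa.simps add: algebra_simps)
next
  case (Suc N)
  have "\<beta>2 * (\<Sum>k<Suc (Suc N). aa k) + (1 - \<beta>2) * aa (Suc N)
      = \<beta>2 * (\<Sum>k<Suc N. aa k) + aa (Suc N)" by (simp add: algebra_simps)
  also have "\<dots> = \<beta>2 * (\<Sum>k<Suc N. aa k) + (1 - \<beta>2) * aa N + c2" by simp
  also have "\<dots> \<le> aa 0 + real N * c2 + c2" using Suc.IH by simp
  finally show ?case by (simp add: algebra_simps)
qed

lemma aa_sum: "\<beta>2 * (\<Sum>k<T. aa k) \<le> aa 0 + real T * c2"
proof -
  obtain N where N: "T = Suc N" using T by (cases T) auto
  have h1: "(1 - \<beta>2) * aa N \<ge> 0" using b2 aa_nonneg by simp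
  have h2: "real N * c2 \<le> real (Suc N) * c2" using c2_nonneg by (intro mult_right_mono) auto
  show ?thesis unfolding N using aa_sum_aux[of N] h1 h2 by linarith
qed

end



context lionalg begin

lemma avg_eq:
  fixes F :: "nat \<Rightarrow> (nat \<times> nat \<times> nat \<Rightarrow> 's) \<Rightarrow> real^'d"
  assumes meas: "\<And>k. (\<lambda>\<omega>. ennreal ((norm (F (Suc k) (\<lambda>i. xi i \<omega>)))\<^sup>2)) \<in> borel_measurable M"
  shows "(\<integral>\<^sup>+\<omega>. ennreal ((1 / real T) * (\<Sum>t=1..T. (norm (F t (\<lambda>i. xi i \<omega>)))\<^sup>2)) \<partial>M)
       = ennreal (1 / real T) * (\<Sum>k<T. \<integral>\<^sup>+\<omega>. ennreal ((norm (F (Suc k) (\<lambda>i. xi i \<omega>)))\<^sup>2) \<partial>M)"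
proof -
  have "(\<integral>\<^sup>+\<omega>. ennreal ((1 / real T) * (\<Sum>t=1..T. (norm (F t (\<lambda>i. xi i \<omega>)))\<^sup>2)) \<partial>M)
      = (\<integral>\<^sup>+\<omega>. ennreal (1 / real T) * (\<Sum>k<T. ennreal ((norm (F (Suc k) (\<lambda>i. xi i \<omega>)))\<^sup>2)) \<partial>M)"
  proof (rule nn_integral_cong)
    fix \<omega>
    have eqs: "(\<Sum>t=1..T. (norm (F t (\<lambda>i. xi i \<omega>)))\<^sup>2) = (\<Sum>k<T. (norm (F (Suc k) (\<lambda>i. xi i \<omega>)))\<^sup>2)"
      by (simp add: sum.atLeast1_atMost_eq)
    have "ennreal ((1 / real T) * (\<Sum>k<T. (norm (F (Suc k) (\<lambda>i. xi i \<omega>)))\<^sup>2))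
        = ennreal (1 / real T) * ennreal (\<Sum>k<T. (norm (F (Suc k) (\<lambda>i. xi i \<omega>)))\<^sup>2)"
      by (rule ennreal_mult) (auto intro: sum_nonneg)
    also have "ennreal (\<Sum>k<T. (norm (F (Suc k) (\<lambda>i. xi i \<omega>)))\<^sup>2) = (\<Sum>k<T. ennreal ((norm (F (Suc k) (\<lambda>i. xi i \<omega>)))\<^sup>2))"
      by (rule sum_ennreal[symmetric]) simp
    finally show "ennreal ((1 / real T) * (\<Sum>t=1..T. (norm (F t (\<lambda>i. xi i \<omega>)))\<^sup>2))
        = ennreal (1 / real T) * (\<Sum>k<T. ennreal ((norm (F (Suc k) (\<lambda>i. xi i \<omega>)))\<^sup>2))" unfolding eqs .
  qed
  also have "\<dots> = ennreal (1 / real T) * (\<integral>\<^sup>+\<omega>. (\<Sum>k<T. ennreal ((norm (F (Suc k) (\<lambda>i. xi i \<omega>)))\<^sup>2)) \<partial>M)"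
    by (rule nn_integral_cmult) (intro borel_measurable_sum meas)
  also have "(\<integral>\<^sup>+\<omega>. (\<Sum>k<T. ennreal ((norm (F (Suc k) (\<lambda>i. xi i \<omega>)))\<^sup>2)) \<partial>M)
      = (\<Sum>k<T. \<integral>\<^sup>+\<omega>. ennreal ((norm (F (Suc k) (\<lambda>i. xi i \<omega>)))\<^sup>2) \<partial>M)"
    by (rule nn_integral_sum) (rule meas)
  finally show ?thesis .
qed

lemma final1:
  "(\<integral>\<^sup>+\<omega>. ennreal ((1 / real T) * (\<Sum>t=1..T. (norm (Em t (\<lambda>i. xi i \<omega>)))\<^sup>2)) \<partial>M)
    \<le> ennreal (aa 0 / (\<beta>2 * real T) + c2 / \<beta>2)"
proof -
  have "(\<integral>\<^sup>+\<omega>. ennreal ((1 / real T) * (\<Sum>t=1..T. (norm (Em t (\<lambda>i. xi i \<omega>)))\<^sup>2)) \<partial>M)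
      = ennreal (1 / real T) * (\<Sum>k<T. AA k)"
    unfolding AA_def by (rule avg_eq[where F=Em, OF Em_sq_meas])
  also have "\<dots> \<le> ennreal (1 / real T) * (\<Sum>k<T. ennreal (aa k))"
    by (intro mult_left_mono sum_mono AA_bound) auto
  also have "\<dots> = ennreal (1 / real T) * ennreal (\<Sum>k<T. aa k)"
    by (subst sum_ennreal) (use aa_nonneg in auto)
  also have "\<dots> = ennreal ((1 / real T) * (\<Sum>k<T. aa k))"
    by (rule ennreal_mult[symmetric]) (auto intro: sum_nonneg aa_nonneg)
  also have "\<dots> \<le> ennreal (aa 0 / (\<beta>2 * real T) + c2 / \<beta>2)"
  proof (rule ennreal_leI)
    have Tp: "0 < real T" using T by simp
    have "(\<Sum>k<T. aa k) \<le> (aa 0 + real T * c2) / \<beta>2"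
      using aa_sum b2 by (simp add: pos_le_divide_eq mult.commute)
    then have "(1 / real T) * (\<Sum>k<T. aa k) \<le> (1 / real T) * ((aa 0 + real T * c2) / \<beta>2)"
      using Tp by (intro mult_left_mono) auto
    also have "\<dots> = aa 0 / (\<beta>2 * real T) + c2 / \<beta>2"
      using Tp b2 by (simp add: field_simps)
    finally show "(1 / real T) * (\<Sum>k<T. aa k) \<le> aa 0 / (\<beta>2 * real T) + c2 / \<beta>2" .
  qed
  finally show ?thesis .
qed

lemma final2:
  "(\<integral>\<^sup>+\<omega>. ennreal ((1 / real T) * (\<Sum>t=1..T. (norm (Ev t (\<lambda>i. xi i \<omega>)))\<^sup>2)) \<partial>M)
    \<le> ennreal (2 * (aa 0 / (\<beta>2 * real T)) + 2 * (c2 / \<beta>2))"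
proof -
  obtain T' where T': "T = Suc T'" using T by (cases T) auto
  have Tp: "0 < real T" using T by simp
  have "(\<integral>\<^sup>+\<omega>. ennreal ((1 / real T) * (\<Sum>t=1..T. (norm (Ev t (\<lambda>i. xi i \<omega>)))\<^sup>2)) \<partial>M)
      = ennreal (1 / real T) * (\<Sum>k<T. BB k)"
    unfolding BB_def by (rule avg_eq[where F=Ev, OF Ev_sq_meas])
  also have "(\<Sum>k<T. BB k) = BB 0 + (\<Sum>k<T'. BB (Suc k))"
    unfolding T' by (rule sum.lessThan_Suc_shift)
  also have "\<dots> \<le> ennreal (aa 0) + (\<Sum>k<T'. ennreal (aa k + c1))"
    using AA_bound[of 0] T BB_bound T' unfolding BB_0 by (intro add_mono sum_mono) auto
  also have "(\<Sum>k<T'. ennreal (aa k + c1)) = ennreal (\<Sum>k<T'. aa k + c1)"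
    by (rule sum_ennreal) (use aa_nonneg c1_nonneg in auto)
  also have "ennreal (aa 0) + ennreal (\<Sum>k<T'. aa k + c1) = ennreal (aa 0 + (\<Sum>k<T'. aa k + c1))"
    by (rule ennreal_plus[symmetric]) (auto intro: sum_nonneg aa_nonneg c1_nonneg add_nonneg_nonneg)
  finally have le: "(\<integral>\<^sup>+\<omega>. ennreal ((1 / real T) * (\<Sum>t=1..T. (norm (Ev t (\<lambda>i. xi i \<omega>)))\<^sup>2)) \<partial>M)
      \<le> ennreal (1 / real T) * ennreal (aa 0 + (\<Sum>k<T'. aa k + c1))"
    by (simp add: mult_left_mono)
  also have "\<dots> = ennreal ((1 / real T) * (aa 0 + (\<Sum>k<T'. aa k + c1)))"
    by (rule ennreal_mult[symmetric]) (auto intro!: sum_nonneg aa_nonneg c1_nonneg add_nonneg_nonneg)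
  also have "\<dots> \<le> ennreal (2 * (aa 0 / (\<beta>2 * real T)) + 2 * (c2 / \<beta>2))"
  proof (rule ennreal_leI)
    have s1: "(\<Sum>k<T'. aa k + c1) \<le> (\<Sum>k<T. aa k) + real T * c1"
    proof -
      have "(\<Sum>k<T'. aa k + c1) = (\<Sum>k<T'. aa k) + real T' * c1" by (simp add: sum.distrib)
      also have "(\<Sum>k<T'. aa k) \<le> (\<Sum>k<T. aa k)"
        unfolding T' using aa_nonneg by (simp add: sum_nonneg)
      also have "real T' * c1 \<le> real T * c1" unfolding T' using c1_nonneg by (intro mult_right_mono) auto
      finally show ?thesis by simp
    qed
    have s2: "(\<Sum>k<T. aa k) \<le> (aa 0 + real T * c2) / \<beta>2"
      using aa_sum b2 by (simp add: pos_le_divide_eq mult.commute)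
    have "(1 / real T) * (aa 0 + (\<Sum>k<T'. aa k + c1))
        \<le> (1 / real T) * (aa 0 + (aa 0 + real T * c2) / \<beta>2 + real T * c1)"
      using s1 s2 Tp by (intro mult_left_mono) auto
    also have "\<dots> = aa 0 / real T + aa 0 / (\<beta>2 * real T) + c2 / \<beta>2 + c1"
      using Tp b2 by (simp add: field_simps)
    also have "\<dots> \<le> 2 * (aa 0 / (\<beta>2 * real T)) + 2 * (c2 / \<beta>2)"
    proof -
      have "aa 0 / real T \<le> aa 0 / (\<beta>2 * real T)"
        using aa_nonneg[of 0] b2 Tp by (intro divide_left_mono) (auto intro: mult_left_le_one_le)
      moreover have "c1 \<le> c2 / \<beta>2"
      proof -
        have bb: "\<beta>1\<^sup>2 \<le> \<beta>2"
        proof -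
          have "\<beta>1\<^sup>2 \<le> (sqrt \<beta>2)\<^sup>2" by (rule power_mono[OF b12]) (use b1 in simp)
          then show ?thesis using b2 by simp
        qed
        have q: "0 \<le> 8 * L\<^sup>2 * \<eta>\<^sup>2 * real CARD('d)" by simp
        have "8 * L\<^sup>2 * \<eta>\<^sup>2 * real CARD('d) \<le> 8 * L\<^sup>2 * \<eta>\<^sup>2 * real CARD('d) / \<beta>2"
          using q b2 by (simp add: le_divide_eq mult_left_le)
        moreover have "2 * \<beta>1\<^sup>2 * \<sigma>\<^sup>2 \<le> 2 * \<beta>2\<^sup>2 * \<sigma>\<^sup>2 / \<beta>2"
        proof -
          have "\<beta>1\<^sup>2 * \<sigma>\<^sup>2 \<le> \<beta>2 * \<sigma>\<^sup>2" by (rule mult_right_mono[OF bb]) simp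
          moreover have "2 * \<beta>2\<^sup>2 * \<sigma>\<^sup>2 / \<beta>2 = 2 * (\<beta>2 * \<sigma>\<^sup>2)" using b2 by (simp add: power2_eq_square)
          ultimately show ?thesis by simp
        qed
        ultimately have "2 * \<beta>1\<^sup>2 * \<sigma>\<^sup>2 + 8 * L\<^sup>2 * \<eta>\<^sup>2 * real CARD('d)
            \<le> (2 * \<beta>2\<^sup>2 * \<sigma>\<^sup>2 + 8 * L\<^sup>2 * \<eta>\<^sup>2 * real CARD('d)) / \<beta>2"
          by (simp add: add_divide_distrib)
        then have "(2 * \<beta>1\<^sup>2 * \<sigma>\<^sup>2 + 8 * L\<^sup>2 * \<eta>\<^sup>2 * real CARD('d)) / real n
            \<le> ((2 * \<beta>2\<^sup>2 * \<sigma>\<^sup>2 + 8 * L\<^sup>2 * \<eta>\<^sup>2 * real CARD('d)) / \<beta>2) / real n"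
          by (rule divide_right_mono) simp
        moreover have "(2 * \<beta>2\<^sup>2 * \<sigma>\<^sup>2 + 8 * L\<^sup>2 * \<eta>\<^sup>2 * real CARD('d)) / real n / \<beta>2
            = ((2 * \<beta>2\<^sup>2 * \<sigma>\<^sup>2 + 8 * L\<^sup>2 * \<eta>\<^sup>2 * real CARD('d)) / \<beta>2) / real n"
          by simp
        ultimately show ?thesis unfolding c1_def c2_def by (simp add: mult.commute)
      qed
      ultimately show ?thesis
        by linarith
    qed
    finally show "(1 / real T) * (aa 0 + (\<Sum>k<T'. aa k + c1)) \<le> 2 * (aa 0 / (\<beta>2 * real T)) + 2 * (c2 / \<beta>2)" .
  qed
  finally show ?thesis .
qed

end

theorem mainTheorem9:
  fixes M :: "'w measure"
    and D :: "nat \<Rightarrow> 's measure"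
    and xi :: "nat \<times> nat \<times> nat \<Rightarrow> 'w \<Rightarrow> 's"
    and f :: "nat \<Rightarrow> real^'d \<Rightarrow> real"
    and fs :: "nat \<Rightarrow> real^'d \<Rightarrow> 's \<Rightarrow> real"
    and gradf :: "nat \<Rightarrow> real^'d \<Rightarrow> real^'d"
    and g :: "nat \<Rightarrow> real^'d \<Rightarrow> 's \<Rightarrow> real^'d"
    and n B0 T d :: nat
    and L \<sigma> \<beta>1 \<beta>2 \<eta> wd :: real
    and x1 :: "real^'d"
  assumes M: "prob_space M"
    and D: "\<And>j. j < n \<Longrightarrow> prob_space (D j)"
    and n: "1 \<le> n"
    and dim: "d = CARD('d)"
    and T: "1 \<le> T"
    \<comment> \<open>sampling: xi (t,j,i) ~ D_j, all drawn samples mutually independent\<close>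
    and xi_distr: "\<And>k. k \<in> lion_samples n B0 \<Longrightarrow>
                     distr M (D (fst (snd k))) (xi k) = D (fst (snd k))"
    and xi_indep: "prob_space.indep_vars M (\<lambda>k. D (fst (snd k))) xi (lion_samples n B0)"
    \<comment> \<open>f_j(x) = E f_j(x;xi), stochastic gradients are gradients of the sample functions\<close>
    and g_meas: "\<And>j. j < n \<Longrightarrow>
                   (\<lambda>(x, s). g j x s) \<in> borel_measurable (borel \<Otimes>\<^sub>M D j)"
    and fs_grad: "\<And>j x s. j < n \<Longrightarrow> s \<in> space (D j) \<Longrightarrow>
                   ((\<lambda>y. fs j y s) has_derivative (\<lambda>h. g j x s \<bullet> h)) (at x)"
    and f_int: "\<And>j x. j < n \<Longrightarrow> integrable (D j) (fs j x)"
    and f_def: "\<And>j x. j < n \<Longrightarrow> f j x = (\<integral>s. fs j x s \<partial>D j)"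
    and f_grad: "\<And>j x. j < n \<Longrightarrow> (f j has_derivative (\<lambda>h. gradf j x \<bullet> h)) (at x)"
    \<comment> \<open>(D2)\<close>
    and D2: "\<And>j x y. j < n \<Longrightarrow>
               (\<integral>\<^sup>+ s. ennreal ((norm (g j x s - g j y s))\<^sup>2) \<partial>D j)
                 \<le> ennreal (L\<^sup>2 * (norm (x - y))\<^sup>2)"
    \<comment> \<open>(D3)\<close>
    and D3_int: "\<And>j x. j < n \<Longrightarrow> integrable (D j) (g j x)"
    and D3_mean: "\<And>j x. j < n \<Longrightarrow> (\<integral>s. g j x s \<partial>D j) = gradf j x"
    and D3_var: "\<And>j x. j < n \<Longrightarrow>
               (\<integral>\<^sup>+ s. ennreal ((norm (g j x s - gradf j x))\<^sup>2) \<partial>D j) \<le> ennreal (\<sigma>\<^sup>2)"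
    \<comment> \<open>parameters\<close>
    and B0: "1 \<le> B0"
    and b1: "0 < \<beta>1" "\<beta>1 \<le> 1"
    and b2: "0 < \<beta>2" "\<beta>2 \<le> 1"
    and b12: "\<beta>1 \<le> sqrt \<beta>2"
    and B0b2: "real B0 * \<beta>2 \<le> 1"
    and eta: "0 < \<eta>"
    and lam: "0 \<le> wd" "wd \<le> 1 / (2 * \<eta> * real T)"
    and x1: "\<And>i. \<bar>x1 $ i\<bar> \<le> \<eta>"
  shows "(\<integral>\<^sup>+ \<omega>. ennreal ((1 / real T) * (\<Sum>t=1..T.
            (norm ((1 / real n) *\<^sub>R (\<Sum>j<n. lion_m n B0 \<beta>1 \<beta>2 \<eta> wd x1 g (\<lambda>k. xi k \<omega>) t j)
                   - (1 / real n) *\<^sub>R (\<Sum>j<n. gradf j (lion_x n B0 \<beta>1 \<beta>2 \<eta> wd x1 g (\<lambda>k. xi k \<omega>) t))))\<^sup>2))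
          \<partial>M)
         \<le> ennreal (\<sigma>\<^sup>2 / (real n * \<beta>2 * real B0 * real T) + 2 * \<sigma>\<^sup>2 * \<beta>2 / real n
                    + 8 * L\<^sup>2 * \<eta>\<^sup>2 * real d / (real n * \<beta>2))
       \<and> (\<integral>\<^sup>+ \<omega>. ennreal ((1 / real T) * (\<Sum>t=1..T.
            (norm ((1 / real n) *\<^sub>R (\<Sum>j<n. lion_v n B0 \<beta>1 \<beta>2 \<eta> wd x1 g (\<lambda>k. xi k \<omega>) t j)
                   - (1 / real n) *\<^sub>R (\<Sum>j<n. gradf j (lion_x n B0 \<beta>1 \<beta>2 \<eta> wd x1 g (\<lambda>k. xi k \<omega>) t))))\<^sup>2))
          \<partial>M)
         \<le> ennreal (2 * \<sigma>\<^sup>2 / (\<beta>2 * real n * real B0 * real T) + 16 * \<eta>\<^sup>2 * L\<^sup>2 * real d / (real n * \<beta>2)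
                    + 4 * \<beta>2 * \<sigma>\<^sup>2 / real n)"
proof -
  interpret LI: lionalg M D xi n B0 gradf g T L \<sigma> \<beta>1 \<beta>2 \<eta> wd x1
    by (intro lionalg.intro lionctx.intro lionalg_axioms.intro) (fact assms)+
  note f1 = LI.final1[unfolded LI.Em_def LI.Mm_def LI.X_def]
  note f2 = LI.final2[unfolded LI.Ev_def LI.V_def LI.X_def]
  have np: "0 < real n" using n by simp
  have Tp: "0 < real T" using T by simp
  have B0p: "0 < real B0" using B0 by simp
  have e1: "LI.aa 0 / (\<beta>2 * real T) + LI.c2 / \<beta>2
     = \<sigma>\<^sup>2 / (real n * \<beta>2 * real B0 * real T) + 2 * \<sigma>\<^sup>2 * \<beta>2 / real n
                    + 8 * L\<^sup>2 * \<eta>\<^sup>2 * real d / (real n * \<beta>2)"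
    using np Tp B0p b2 unfolding LI.c2_def LI.aa.simps dim by (simp add: field_simps power2_eq_square)
  have e2: "2 * (LI.aa 0 / (\<beta>2 * real T)) + 2 * (LI.c2 / \<beta>2)
     = 2 * \<sigma>\<^sup>2 / (\<beta>2 * real n * real B0 * real T) + 16 * \<eta>\<^sup>2 * L\<^sup>2 * real d / (real n * \<beta>2)
                    + 4 * \<beta>2 * \<sigma>\<^sup>2 / real n"
    using np Tp B0p b2 unfolding LI.c2_def LI.aa.simps dim by (simp add: field_simps power2_eq_square)
  show ?thesis
  proof (rule conjI)
    show "(\<integral>\<^sup>+ \<omega>. ennreal ((1 / real T) * (\<Sum>t=1..T.
            (norm ((1 / real n) *\<^sub>R (\<Sum>j<n. lion_m n B0 \<beta>1 \<beta>2 \<eta> wd x1 g (\<lambda>k. xi k \<omega>) t j)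
                   - (1 / real n) *\<^sub>R (\<Sum>j<n. gradf j (lion_x n B0 \<beta>1 \<beta>2 \<eta> wd x1 g (\<lambda>k. xi k \<omega>) t))))\<^sup>2))
          \<partial>M)
         \<le> ennreal (\<sigma>\<^sup>2 / (real n * \<beta>2 * real B0 * real T) + 2 * \<sigma>\<^sup>2 * \<beta>2 / real n
                    + 8 * L\<^sup>2 * \<eta>\<^sup>2 * real d / (real n * \<beta>2))"
      using f1 unfolding e1 .
    show "(\<integral>\<^sup>+ \<omega>. ennreal ((1 / real T) * (\<Sum>t=1..T.
            (norm ((1 / real n) *\<^sub>R (\<Sum>j<n. lion_v n B0 \<beta>1 \<beta>2 \<eta> wd x1 g (\<lambda>k. xi k \<omega>) t j)
                   - (1 / real n) *\<^sub>R (\<Sum>j<n. gradf j (lion_x n B0 \<beta>1 \<beta>2 \<eta> wd x1 g (\<lambda>k. xi k \<omega>) t))))\<^sup>2))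
          \<partial>M)
         \<le> ennreal (2 * \<sigma>\<^sup>2 / (\<beta>2 * real n * real B0 * real T) + 16 * \<eta>\<^sup>2 * L\<^sup>2 * real d / (real n * \<beta>2)
                    + 4 * \<beta>2 * \<sigma>\<^sup>2 / real n)"
      using f2 unfolding e2 .
  qed
qed

end
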